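(* Let $(v,L)$ be a (sufficiently regular) solution on $(t_0,t_1)\times\mathbb T^3$ of the system \[ \begin{aligned} \partial_t v^i&=-\frac{\alpha(1-3K)}{t}v^i - \frac{K}{1+K}t^{-\alpha}(1-|v|^2)\partial_i L-t^{-\alpha}v^j\partial_j v^i +t^{-\alpha}\Big(1-\frac{1-K}{1-K|v|^2}\Big)v^i\partial_j v^j\\ &\quad+t^{-\alpha}\frac{1-K}{1+K}\Big(1-\frac{1-K}{1-K|v|^2}\Big)v^i v^j\partial_j L +\frac{\alpha(1-3K)}{t}\frac{1-K}{1-K|v|^2}|v|^2 v^i,\\ \partial_tL&=-t^{-\alpha}\frac{1+K}{1-K|v|^2}\partial_j v^j-t^{-\alpha}\frac{1-K}{1-K|v|^2} v^j\partial_j L+\frac{\alpha(1+K)}{t}\frac{1-3K}{1-K|v|^2}|v|^2 . \end{aligned} \] Then \[ \begin{aligned} \partial_t\Big(\frac12\int\frac{1}{1-|v|^2} v_m\partial_i v^m v_n\partial^i v^n\Big) &=-\frac{\alpha(1-3K)}{t}\int\frac{v_m\partial^iv^m}{1-|v|^2}v_n\partial_iv^n \\ &\quad-\frac{K}{1+K}t^{-\alpha}\int v_m\partial^iv^m\, \partial_i(v^n\partial_nL)\frac{1-|v|^2}{1-K|v|^2}\\ &\quad +t^{-\alpha}\int\frac{v_m\partial^iv^m}{1-|v|^2}\partial_i(\partial_jv^j)\,|v|^2\Big(1-\frac{1-K}{1-K|v|^2}\Big) +f(t), \end{aligned} \] where $f(t)$ is a perturbative term.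
   Context: Standing assumptions: $\alpha>0$ and $0\le K\le1/3$ constants, $t>1$, $|v|<1/10$. $\int$ denotes $\int_{\mathbb T^3}\cdot\,d^3x$ over the standard flat torus; indices raised/lowered with $\delta$, repeated indices summed, $|v|^2=\delta_{ij}v^iv^j$; $D$ is the spatial gradient. A function $f(t)$ is called perturbative if $|f(t)|\le C\frac{1+t^{1-\alpha}}{t}p(\|DL\|_{L^2},\|Dv\|_{L^2},\|v\|_{L^\infty},\|Dv\|_{L^\infty})$ for a constant $C$ and a polynomial $p$ whose lowest-order terms have degree at least 3. *)

theory Defs
  imports "HOL-Analysis.Analysis"
begin

text \<open>C-infinity: differentiable, and every first partial derivative is again C-infinity
  (coinductively, i.e. derivatives of all orders exist).\<close>
coinductive smooth_on :: "'a::euclidean_space set \<Rightarrow> ('a \<Rightarrow> real) \<Rightarrow> bool" where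
  "f differentiable_on S \<Longrightarrow> (\<forall>b\<in>Basis. smooth_on S (\<lambda>x. frechet_derivative f (at x) b))
     \<Longrightarrow> smooth_on S f"

definition pd :: "3 \<Rightarrow> (real^3 \<Rightarrow> real) \<Rightarrow> real^3 \<Rightarrow> real" where
  "pd i f x = deriv (\<lambda>s. f (x + s *\<^sub>R axis i 1)) 0"

definition dtd :: "(real \<Rightarrow> real^3 \<Rightarrow> real) \<Rightarrow> real \<Rightarrow> real^3 \<Rightarrow> real" where
  "dtd u t x = deriv (\<lambda>s. u s x) t"

text \<open>Standard flat torus R^3/Z^3: periodic functions, integrated over the unit cube.\<close>
definition periodic3 :: "(real^3 \<Rightarrow> 'b) \<Rightarrow> bool" where
  "periodic3 f \<longleftrightarrow> (\<forall>x i. f (x + axis i 1) = f x)"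

definition tint :: "(real^3 \<Rightarrow> real) \<Rightarrow> real" where
  "tint f = integral (cbox 0 One) f"

definition DL_L2 :: "(real \<Rightarrow> real^3 \<Rightarrow> real) \<Rightarrow> real \<Rightarrow> real" where
  "DL_L2 L t = sqrt (tint (\<lambda>x. \<Sum>i\<in>UNIV. (pd i (L t) x)\<^sup>2))"

definition Dv_L2 :: "(real \<Rightarrow> real^3 \<Rightarrow> real^3) \<Rightarrow> real \<Rightarrow> real" where
  "Dv_L2 v t = sqrt (tint (\<lambda>x. \<Sum>i\<in>UNIV. \<Sum>j\<in>UNIV. (pd i (\<lambda>y. v t y $ j) x)\<^sup>2))"

definition v_Linf :: "(real \<Rightarrow> real^3 \<Rightarrow> real^3) \<Rightarrow> real \<Rightarrow> real" where
  "v_Linf v t = (SUP x. norm (v t x))"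

definition Dv_Linf :: "(real \<Rightarrow> real^3 \<Rightarrow> real^3) \<Rightarrow> real \<Rightarrow> real" where
  "Dv_Linf v t = (SUP x. sqrt (\<Sum>i\<in>UNIV. \<Sum>j\<in>UNIV. (pd i (\<lambda>y. v t y $ j) x)\<^sup>2))"

text \<open>Polynomials in 4 real variables: finitely supported coefficient function on exponent
  tuples; "lowest-order terms of degree at least 3" means all monomials have degree \<ge> 3.\<close>
definition poly4 :: "(nat \<times> nat \<times> nat \<times> nat \<Rightarrow> real) \<Rightarrow> real \<Rightarrow> real \<Rightarrow> real \<Rightarrow> real \<Rightarrow> real" where
  "poly4 c a b d e = (\<Sum>(i,j,k,l)\<in>{m. c m \<noteq> 0}. c (i,j,k,l) * a^i * b^j * d^k * e^l)"

definition lowdeg3 :: "(nat \<times> nat \<times> nat \<times> nat \<Rightarrow> real) \<Rightarrow> bool" where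
  "lowdeg3 c \<longleftrightarrow> finite {m. c m \<noteq> 0} \<and> (\<forall>i j k l. c (i,j,k,l) \<noteq> 0 \<longrightarrow> 3 \<le> i + j + k + l)"

definition wv :: "(real \<Rightarrow> real^3 \<Rightarrow> real^3) \<Rightarrow> real \<Rightarrow> 3 \<Rightarrow> real^3 \<Rightarrow> real" where
  "wv v t i x = (\<Sum>m\<in>UNIV. v t x $ m * pd i (\<lambda>y. v t y $ m) x)"

end

theory Submission
  imports Defs
begin

definition dd :: "('a::real_normed_vector \<Rightarrow> real) \<Rightarrow> 'a \<Rightarrow> 'a \<Rightarrow> real" where
  "dd A b z = frechet_derivative A (at z) b"

lemma line_deriv:
  fixes A :: "'a::real_normed_vector \<Rightarrow> real"
  assumes "(A has_derivative A') (at (p + s0 *\<^sub>R b))"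
  shows "((\<lambda>s. A (p + s *\<^sub>R b)) has_real_derivative A' b) (at s0)"
proof -
  have g: "((\<lambda>s. p + s *\<^sub>R b) has_derivative (\<lambda>s. s *\<^sub>R b)) (at s0)"
    by (auto intro!: derivative_eq_intros)
  have "((A \<circ> (\<lambda>s. p + s *\<^sub>R b)) has_derivative (A' \<circ> (\<lambda>s. s *\<^sub>R b))) (at s0)"
    by (rule diff_chain_at[OF g assms])
  moreover have "bounded_linear A'" using assms has_derivative_bounded_linear by blast
  then have "(A' \<circ> (\<lambda>s. s *\<^sub>R b)) = (\<lambda>s. s * A' b)"
    by (auto simp: linear_simps o_def)
  ultimately show ?thesis
    by (simp add: has_field_derivative_def o_def mult.commute[of _ "A' b"])
qed

lemma pd_hasd:
  assumes "(f has_derivative f') (at x)"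
  shows "pd i f x = f' (axis i 1)"
proof -
  have "((\<lambda>s. f (x + s *\<^sub>R axis i 1)) has_real_derivative f' (axis i 1)) (at 0)"
    using line_deriv[of f f' x 0 "axis i 1"] assms by simp
  then show ?thesis unfolding pd_def by (rule DERIV_imp_deriv)
qed

lemma dtd_hasd:
  assumes "((\<lambda>s. u s x) has_real_derivative D) (at t)"
  shows "dtd u t x = D"
  unfolding dtd_def using assms by (rule DERIV_imp_deriv)

lemma smooth_diff: "smooth_on S f \<Longrightarrow> f differentiable_on S"
  by (erule smooth_on.cases) auto

lemma smooth_dd: "smooth_on S f \<Longrightarrow> b \<in> Basis \<Longrightarrow> smooth_on S (dd f b)"
  unfolding dd_def by (erule smooth_on.cases) auto

lemma smooth_cont: "smooth_on S f \<Longrightarrow> continuous_on S f"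
  using smooth_diff differentiable_imp_continuous_on by blast

lemma diff_at_hasd:
  assumes "f differentiable_on S" "open S" "z \<in> S"
  shows "(f has_derivative (\<lambda>h. dd f h z)) (at z)"
proof -
  have "f differentiable (at z)"
    using assms by (metis at_within_open differentiable_on_def)
  then show ?thesis unfolding dd_def
    using frechet_derivative_works by metis
qed

lemma dd_linear:
  assumes "f differentiable_on S" "open S" "z \<in> S"
  shows "bounded_linear (\<lambda>h. dd f h z)"
  using diff_at_hasd[OF assms] has_derivative_bounded_linear by blast

lemma basis_t: "((1::real), (0::real^3)) \<in> Basis"
  by (simp add: Basis_prod_def)

lemma basis_x: "((0::real), axis i (1::real)) \<in> Basis"
  by (simp add: Basis_prod_def)

lemma clairaut:
  fixes A :: "'a::euclidean_space \<Rightarrow> real"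
  assumes sm: "smooth_on S A" and oS: "open S" and zS: "z \<in> S" and bB: "b \<in> Basis" and cB: "c \<in> Basis"
  shows "dd (dd A b) c z = dd (dd A c) b z"
proof -
  define B where "B = dd A b"
  define C where "C = dd A c"
  define G where "G = dd C b"
  have smB: "smooth_on S B" unfolding B_def using sm bB by (rule smooth_dd)
  have smC: "smooth_on S C" unfolding C_def using sm cB by (rule smooth_dd)
  have smG: "smooth_on S G" unfolding G_def using smC bB by (rule smooth_dd)
  have dA: "A differentiable_on S" using sm by (rule smooth_diff)
  have dB: "B differentiable_on S" using smB by (rule smooth_diff)
  have dC: "C differentiable_on S" using smC by (rule smooth_diff)
  have cG: "continuous_on S G" using smG by (rule smooth_cont)
  obtain e where e: "e > 0" "ball z e \<subseteq> S" using oS zS open_contains_ball by blast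
  define \<delta> where "\<delta> = e / 3"
  have dpos: "\<delta> > 0" using e by (simp add: \<delta>_def)
  have nb: "norm b = 1" using bB by simp
  have nc: "norm c = 1" using cB by simp
  have inS: "z + s *\<^sub>R b + r *\<^sub>R c \<in> S" if "\<bar>s\<bar> \<le> \<delta>" "\<bar>r\<bar> \<le> \<delta>" for s r
  proof -
    have "norm (s *\<^sub>R b + r *\<^sub>R c) \<le> \<bar>s\<bar> + \<bar>r\<bar>"
      using norm_triangle_ineq[of "s *\<^sub>R b" "r *\<^sub>R c"] nb nc by simp
    also have "\<dots> < e" using that e by (simp add: \<delta>_def)
    finally have "dist z (z + s *\<^sub>R b + r *\<^sub>R c) < e"
      by (metis add.assoc add_diff_cancel_left' dist_commute dist_norm)
    then have "z + s *\<^sub>R b + r *\<^sub>R c \<in> ball z e" by simp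
    then show ?thesis using e by blast
  qed
  have hA: "(A has_derivative (\<lambda>h. dd A h p)) (at p)" if "p \<in> S" for p
    using diff_at_hasd[OF dA oS that] .
  have hB: "(B has_derivative (\<lambda>h. dd B h p)) (at p)" if "p \<in> S" for p
    using diff_at_hasd[OF dB oS that] .
  have hC: "(C has_derivative (\<lambda>h. dd C h p)) (at p)" if "p \<in> S" for p
    using diff_at_hasd[OF dC oS that] .
  define U where "U = {-\<delta>..\<delta>}"
  have U0: "0 \<in> interior U" using dpos by (simp add: U_def)
  have key: "B (z + r *\<^sub>R c) - B (z + (-\<delta>) *\<^sub>R c) = integral {-\<delta>..r} (\<lambda>\<rho>. G (z + \<rho> *\<^sub>R c))"
    if r: "r \<in> {-\<delta>..\<delta>}" for r
  proof -
    have ftc: "((\<lambda>\<rho>. C (z + s *\<^sub>R b + \<rho> *\<^sub>R c)) has_integral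
        (A (z + s *\<^sub>R b + r *\<^sub>R c) - A (z + s *\<^sub>R b + (-\<delta>) *\<^sub>R c))) {-\<delta>..r}" if s: "s \<in> U" for s
    proof (rule fundamental_theorem_of_calculus)
      show "-\<delta> \<le> r" using r by simp
      fix \<rho> assume \<rho>: "\<rho> \<in> {-\<delta>..r}"
      have "z + s *\<^sub>R b + \<rho> *\<^sub>R c \<in> S" using \<rho> r s by (intro inS) (auto simp: U_def)
      from line_deriv[OF hA[OF this]]
      have "((\<lambda>x. A (z + s *\<^sub>R b + x *\<^sub>R c)) has_real_derivative C (z + s *\<^sub>R b + \<rho> *\<^sub>R c)) (at \<rho>)"
        by (simp add: C_def)
      then show "((\<lambda>x. A (z + s *\<^sub>R b + x *\<^sub>R c)) has_vector_derivative C (z + s *\<^sub>R b + \<rho> *\<^sub>R c)) (at \<rho> within {-\<delta>..r})"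
        by (simp add: has_real_derivative_iff_has_vector_derivative has_vector_derivative_at_within)
    qed
    have leib: "((\<lambda>s. integral (cbox (-\<delta>) r) (\<lambda>\<rho>. C (z + s *\<^sub>R b + \<rho> *\<^sub>R c))) has_field_derivative
        integral (cbox (-\<delta>) r) (\<lambda>\<rho>. G (z + 0 *\<^sub>R b + \<rho> *\<^sub>R c))) (at 0 within U)"
    proof (rule leibniz_rule_field_derivative)
      fix s \<rho> assume s: "s \<in> U" and \<rho>: "\<rho> \<in> cbox (-\<delta>) r"
      have "z + \<rho> *\<^sub>R c + s *\<^sub>R b \<in> S" using inS[of s \<rho>] s \<rho> r by (auto simp: U_def add_ac)
      from line_deriv[OF hC[OF this]]
      have "((\<lambda>x. C (z + \<rho> *\<^sub>R c + x *\<^sub>R b)) has_real_derivative G (z + \<rho> *\<^sub>R c + s *\<^sub>R b)) (at s)"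
        by (simp add: G_def)
      then show "((\<lambda>s. C (z + s *\<^sub>R b + \<rho> *\<^sub>R c)) has_field_derivative G (z + s *\<^sub>R b + \<rho> *\<^sub>R c)) (at s within U)"
        by (simp add: add_ac has_field_derivative_at_within)
    next
      fix s assume s: "s \<in> U"
      show "(\<lambda>\<rho>. C (z + s *\<^sub>R b + \<rho> *\<^sub>R c)) integrable_on cbox (-\<delta>) r"
        using ftc[OF s] by (auto simp: integrable_on_def)
    next
      have "continuous_on (U \<times> cbox (-\<delta>) r) (G \<circ> (\<lambda>(s,\<rho>). z + s *\<^sub>R b + \<rho> *\<^sub>R c))"
      proof (rule continuous_on_compose)
        show "continuous_on (U \<times> cbox (- \<delta>) r) (\<lambda>(s, \<rho>). z + s *\<^sub>R b + \<rho> *\<^sub>R c)"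
          by (auto intro!: continuous_intros simp: split_beta)
        show "continuous_on ((\<lambda>(s, \<rho>). z + s *\<^sub>R b + \<rho> *\<^sub>R c) ` (U \<times> cbox (- \<delta>) r)) G"
          by (rule continuous_on_subset[OF cG]) (use r in \<open>auto simp: U_def intro!: inS\<close>)
      qed
      then show "continuous_on (U \<times> cbox (-\<delta>) r) (\<lambda>(s,\<rho>). G (z + s *\<^sub>R b + \<rho> *\<^sub>R c))"
        by (simp add: o_def split_beta)
    next
      show "0 \<in> U" using dpos by (simp add: U_def)
      show "convex U" by (simp add: U_def)
    qed
    have leib': "((\<lambda>s. integral {-\<delta>..r} (\<lambda>\<rho>. C (z + s *\<^sub>R b + \<rho> *\<^sub>R c))) has_field_derivative
        integral {-\<delta>..r} (\<lambda>\<rho>. G (z + \<rho> *\<^sub>R c))) (at 0)"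
      using leib at_within_interior[OF U0] by simp
    have eqI: "integral {-\<delta>..r} (\<lambda>\<rho>. C (z + s *\<^sub>R b + \<rho> *\<^sub>R c)) =
        A (z + r *\<^sub>R c + s *\<^sub>R b) - A (z + (-\<delta>) *\<^sub>R c + s *\<^sub>R b)" if "s \<in> {-\<delta><..<\<delta>}" for s
      using integral_unique[OF ftc, of s] that by (auto simp: U_def algebra_simps)
    have d2: "((\<lambda>s. A (z + r *\<^sub>R c + s *\<^sub>R b) - A (z + (-\<delta>) *\<^sub>R c + s *\<^sub>R b)) has_field_derivative
         B (z + r *\<^sub>R c) - B (z + (-\<delta>) *\<^sub>R c)) (at 0)"
    proof -
      have p1: "z + r *\<^sub>R c + 0 *\<^sub>R b \<in> S" using inS[of 0 r] r dpos by (auto simp: add_ac)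
      have p2: "z + (-\<delta>) *\<^sub>R c + 0 *\<^sub>R b \<in> S" using inS[of 0 "-\<delta>"] dpos by (auto simp: add_ac)
      show ?thesis
        using DERIV_diff[OF line_deriv[OF hA[OF p1]] line_deriv[OF hA[OF p2]]]
        by (simp add: B_def)
    qed
    have "((\<lambda>s. A (z + r *\<^sub>R c + s *\<^sub>R b) - A (z + (-\<delta>) *\<^sub>R c + s *\<^sub>R b)) has_field_derivative
        integral {-\<delta>..r} (\<lambda>\<rho>. G (z + \<rho> *\<^sub>R c))) (at 0)"
      by (rule has_field_derivative_transform_within_open[where S="{-\<delta><..<\<delta>}", OF leib' _ _ eqI]) (use dpos in auto)
    then show ?thesis using DERIV_unique[OF d2] by blast
  qed
  have cg: "continuous_on {-\<delta>..\<delta>} (\<lambda>\<rho>. G (z + \<rho> *\<^sub>R c))"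
  proof -
    have "continuous_on {-\<delta>..\<delta>} (G \<circ> (\<lambda>\<rho>. z + \<rho> *\<^sub>R c))"
      apply (rule continuous_on_compose)
       apply (auto intro!: continuous_intros)
      apply (rule continuous_on_subset[OF cG])
      using inS[of 0] by auto
    then show ?thesis by (simp add: o_def)
  qed
  have ftc2: "((\<lambda>r. integral {-\<delta>..r} (\<lambda>\<rho>. G (z + \<rho> *\<^sub>R c))) has_real_derivative G (z + 0 *\<^sub>R c)) (at 0)"
    using integral_has_real_derivative[OF cg, of 0] dpos at_within_interior[of 0 "{-\<delta>..\<delta>}"] by simp
  have "((\<lambda>r. B (z + r *\<^sub>R c)) has_real_derivative G z) (at 0)"
  proof -
    have "((\<lambda>r. B (z + (-\<delta>) *\<^sub>R c) + integral {-\<delta>..r} (\<lambda>\<rho>. G (z + \<rho> *\<^sub>R c))) has_real_derivative G z) (at 0)"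
      using DERIV_add[OF DERIV_const ftc2] by simp
    then show ?thesis
      by (rule has_field_derivative_transform_within_open[where S="{-\<delta><..<\<delta>}"])
         (use dpos in \<open>auto simp: key[symmetric]\<close>)
  qed
  moreover have "((\<lambda>r. B (z + r *\<^sub>R c)) has_real_derivative dd B c z) (at 0)"
    using line_deriv[of B _ z 0 c] hB[OF zS] by simp
  ultimately show ?thesis using DERIV_unique unfolding B_def C_def G_def by blast
qed

lemma one_nth3 [simp]: "(One :: real^3) $ i = 1"
  by (metis Cart_1 one_index)

lemma sumB3 [simp]: "(\<Sum>x\<in>(Basis::(real^3) set). x $ i) = 1"
  by (metis Cart_1 one_index[of i] sum_component[of "\<lambda>uu. uu" Basis i])

lemma transl_inv:
  fixes f :: "real^3 \<Rightarrow> real"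
  assumes per: "periodic3 f" and cf: "continuous_on UNIV f" and s: "0 \<le> s" "s \<le> 1"
  shows "integral (cbox 0 One) (\<lambda>x. f (x + s *\<^sub>R axis j 1)) = integral (cbox 0 One) f"
proof -
  define e :: "real^3" where "e = axis j 1"
  have eB: "e \<in> Basis" by (simp add: e_def)
  have ie: "x \<bullet> e = x $ j" for x by (simp add: e_def inner_axis)
  have ei: "e $ i = (if i = j then 1 else 0)" for i by (simp add: e_def axis_def)
  have int: "f integrable_on cbox a b" for a b
    by (rule integrable_continuous) (rule continuous_on_subset[OF cf], simp)
  have "((\<lambda>x. f (x + s *\<^sub>R e)) has_integral integral (cbox (0 + s *\<^sub>R e) (One + s *\<^sub>R e)) f) (cbox 0 One)"
  proof -
    have "(f has_integral integral (cbox (0 + s *\<^sub>R e) (One + s *\<^sub>R e)) f) (cbox (0 + s *\<^sub>R e) (One + s *\<^sub>R e))"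
      using int by (rule integrable_integral)
    then have "((f \<circ> (+) (s *\<^sub>R e)) has_integral integral (cbox (0 + s *\<^sub>R e) (One + s *\<^sub>R e)) f) (cbox 0 One)"
      using has_integral_shift_cbox_iff by blast
    then show ?thesis by (simp add: o_def add.commute)
  qed
  then have 1: "integral (cbox 0 One) (\<lambda>x. f (x + s *\<^sub>R e)) = integral (cbox (s *\<^sub>R e) (One + s *\<^sub>R e)) f"
    by (simp add: integral_unique)
  define Bx where "Bx = cbox (s *\<^sub>R e) (One + s *\<^sub>R e)"
  have 2: "integral Bx f = integral (Bx \<inter> {x. x \<bullet> e \<le> 1}) f + integral (Bx \<inter> {x. x \<bullet> e \<ge> 1}) f"
    unfolding Bx_def by (rule integral_split[OF int eB])
  have 3: "integral (cbox 0 One) f = integral (cbox 0 One \<inter> {x. x \<bullet> e \<le> s}) f + integral (cbox 0 One \<inter> {x. x \<bullet> e \<ge> s}) f"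
    by (rule integral_split[OF int eB])
  have 4: "Bx \<inter> {x. x \<bullet> e \<le> 1} = cbox 0 One \<inter> {x. x \<bullet> e \<ge> s}"
    unfolding Bx_def using s by (auto simp: mem_box_cart ie ei split: if_splits; smt (verit))
  define b' :: "real^3" where "b' = (\<chi> i. if i = j then s else 1)"
  have 5: "cbox 0 One \<inter> {x. x \<bullet> e \<le> s} = cbox 0 b'"
    unfolding b'_def using s by (auto simp: mem_box_cart ie split: if_splits; smt (verit))
  have 6: "Bx \<inter> {x. x \<bullet> e \<ge> 1} = cbox (0 + e) (b' + e)"
    unfolding Bx_def b'_def using s by (auto simp: mem_box_cart ie ei split: if_splits; smt (verit))
  have 7: "integral (cbox (0 + e) (b' + e)) f = integral (cbox 0 b') f"
  proof -
    have "(f has_integral integral (cbox (0 + e) (b' + e)) f) (cbox (0 + e) (b' + e))"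
      using int by (rule integrable_integral)
    then have "((f \<circ> (+) e) has_integral integral (cbox (0 + e) (b' + e)) f) (cbox 0 b')"
      using has_integral_shift_cbox_iff by blast
    moreover have "f \<circ> (+) e = f" using per unfolding periodic3_def e_def
      by (auto simp: o_def add.commute)
    ultimately show ?thesis by (simp add: integral_unique)
  qed
  show ?thesis
    using 1 2 3 4 5 6 7 unfolding Bx_def e_def by simp
qed

lemma transl_inv_all:
  fixes f :: "real^3 \<Rightarrow> real"
  assumes per: "periodic3 f" and cf: "continuous_on UNIV f" and s: "-1 \<le> s" "s \<le> 1"
  shows "integral (cbox 0 One) (\<lambda>x. f (x + s *\<^sub>R axis j 1)) = integral (cbox 0 One) f"
proof (cases "s \<ge> 0")
  case True then show ?thesis using transl_inv[OF per cf] s by simp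
next
  case False
  have "(\<lambda>x. f (x + s *\<^sub>R axis j 1)) = (\<lambda>x. f (x + (s + 1) *\<^sub>R axis j 1))"
  proof
    fix x
    have "f (x + (s + 1) *\<^sub>R axis j 1) = f ((x + s *\<^sub>R axis j 1) + axis j 1)"
      by (simp add: algebra_simps)
    also have "\<dots> = f (x + s *\<^sub>R axis j 1)" using per unfolding periodic3_def by blast
    finally show "f (x + s *\<^sub>R axis j 1) = f (x + (s + 1) *\<^sub>R axis j 1)" by simp
  qed
  then show ?thesis using transl_inv[OF per cf, of "s+1" j] False s by simp
qed

lemma torus_ibp:
  fixes F :: "real^3 \<Rightarrow> real"
  assumes per: "periodic3 F" and hd: "\<And>y. (F has_derivative F' y) (at y)"
    and cont: "continuous_on UNIV (\<lambda>y. F' y (axis j 1))"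
  shows "tint (\<lambda>y. F' y (axis j 1)) = 0"
proof -
  define e :: "real^3" where "e = axis j 1"
  have cF: "continuous_on UNIV F"
    using hd by (meson continuous_on_eq_continuous_within has_derivative_continuous has_derivative_at_withinI)
  define U where "U = {-1/2..1/2::real}"
  have U0: "0 \<in> interior U" by (simp add: U_def)
  have leib: "((\<lambda>s. integral (cbox 0 One) (\<lambda>x. F (x + s *\<^sub>R e))) has_field_derivative
     integral (cbox 0 One) (\<lambda>x. F' (x + 0 *\<^sub>R e) e)) (at 0 within U)"
  proof (rule leibniz_rule_field_derivative)
    fix s x
    show "((\<lambda>s. F (x + s *\<^sub>R e)) has_field_derivative F' (x + s *\<^sub>R e) e) (at s within U)"
      using line_deriv[OF hd] has_field_derivative_at_within by blast
  next
    fix s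
    show "(\<lambda>x. F (x + s *\<^sub>R e)) integrable_on cbox 0 One"
      by (rule integrable_continuous) (auto intro!: continuous_on_compose2[OF cF] continuous_intros)
  next
    have "continuous_on (U \<times> cbox 0 One) ((\<lambda>y. F' y e) \<circ> (\<lambda>(s, x). x + s *\<^sub>R e))"
      by (rule continuous_on_compose) (auto intro!: continuous_intros simp: split_beta e_def
           intro: continuous_on_subset[OF cont])
    then show "continuous_on (U \<times> cbox 0 One) (\<lambda>(s, x). F' (x + s *\<^sub>R e) e)"
      by (simp add: o_def split_beta)
  qed (auto simp: U_def)
  then have d1: "((\<lambda>s. integral (cbox 0 One) (\<lambda>x. F (x + s *\<^sub>R e))) has_field_derivative
     integral (cbox 0 One) (\<lambda>x. F' x e)) (at 0)"
    using at_within_interior[OF U0] by simp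
  have "((\<lambda>s. integral (cbox 0 One) F) has_field_derivative integral (cbox 0 One) (\<lambda>x. F' x e)) (at 0)"
    by (rule has_field_derivative_transform_within_open[OF d1, where S="{-1<..<1}"])
       (auto simp: e_def transl_inv_all[OF per cF])
  then have "integral (cbox 0 One) (\<lambda>x. F' x e) = 0"
    using DERIV_const DERIV_unique by blast
  then show ?thesis by (simp add: tint_def e_def)
qed

lemma per_nat:
  assumes "periodic3 f" shows "f (x + real n *\<^sub>R axis i 1) = f x"
proof (induction n)
  case 0 then show ?case by simp
next
  case (Suc n)
  have "f (x + real (Suc n) *\<^sub>R axis i 1) = f ((x + real n *\<^sub>R axis i 1) + axis i 1)"
    by (simp add: algebra_simps)
  also have "\<dots> = f (x + real n *\<^sub>R axis i 1)" using assms unfolding periodic3_def by blast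
  finally show ?case using Suc by simp
qed

lemma per_int:
  assumes "periodic3 f" shows "f (x + of_int n *\<^sub>R axis i 1) = f x"
proof (cases "n \<ge> 0")
  case True
  then show ?thesis using per_nat[OF assms, of x "nat n" i] by simp
next
  case False
  have "f x = f ((x + of_int n *\<^sub>R axis i 1) + real (nat (-n)) *\<^sub>R axis i 1)"
    using False by (simp add: algebra_simps)
  also have "\<dots> = f (x + of_int n *\<^sub>R axis i 1)" by (rule per_nat[OF assms])
  finally show ?thesis by simp
qed

lemma axis_nth3: "(axis k (1::real) :: real^3) $ i = (if i = k then 1 else 0)"
  by (simp add: axis_def)

lemma per_reduce:
  assumes "periodic3 f" shows "\<exists>y\<in>cbox 0 One. f x = f y"
proof -
  define n where "n i = \<lfloor>x $ i\<rfloor>" for i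
  define y where "y = x - of_int (n 1) *\<^sub>R axis 1 1 - of_int (n 2) *\<^sub>R axis 2 1 - of_int (n 3) *\<^sub>R axis (3::3) (1::real)"
  have yi: "y $ i = x $ i - of_int (n i)" for i
    unfolding y_def using exhaust_3[of i] by (auto simp: axis_nth3)
  have "y \<in> cbox 0 One"
    unfolding mem_box_cart
  proof (intro allI conjI)
    fix i
    have "of_int \<lfloor>x $ i\<rfloor> \<le> x $ i" "x $ i < of_int \<lfloor>x $ i\<rfloor> + 1"
      by (rule of_int_floor_le) (rule real_of_int_floor_add_one_gt)
    then show "(0::real^3) $ i \<le> y $ i" "y $ i \<le> One $ i" unfolding yi n_def by auto linarith
  qed
  moreover have "f x = f y"
  proof -
    have "x = ((y + of_int (n 3) *\<^sub>R axis 3 1) + of_int (n 2) *\<^sub>R axis 2 1) + of_int (n 1) *\<^sub>R axis 1 1"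
      by (simp add: y_def)
    then have "f x = f (((y + of_int (n 3) *\<^sub>R axis 3 1) + of_int (n 2) *\<^sub>R axis 2 1) + of_int (n 1) *\<^sub>R axis 1 1)"
      by simp
    also have "\<dots> = f y" using per_int[OF assms] by simp
    finally show ?thesis .
  qed
  ultimately show ?thesis by blast
qed

lemma per_sup:
  fixes g :: "real^3 \<Rightarrow> real"
  assumes "periodic3 g" "continuous_on UNIV g"
  shows "bdd_above (range g)" "g x \<le> (SUP y. g y)"
proof -
  have "compact (g ` cbox 0 One)"
    by (rule compact_continuous_image) (auto intro: continuous_on_subset[OF assms(2)])
  then have "bdd_above (g ` cbox 0 One)" by (meson bdd_above_Icc bounded_imp_bdd_above compact_imp_bounded)
  moreover have "range g \<subseteq> g ` cbox 0 One" using per_reduce[OF assms(1)] by blast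
  ultimately show b: "bdd_above (range g)" by (meson bdd_above_mono)
  show "g x \<le> (SUP y. g y)" by (rule cSUP_upper[OF _ b]) simp
qed

lemma per_pd:
  assumes "periodic3 f" shows "periodic3 (pd i f)"
  unfolding periodic3_def pd_def
proof (intro allI)
  fix x k
  have "(\<lambda>s. f (x + axis k 1 + s *\<^sub>R axis i 1)) = (\<lambda>s. f ((x + s *\<^sub>R axis i 1) + axis k 1))"
    by (simp add: algebra_simps)
  also have "\<dots> = (\<lambda>s. f (x + s *\<^sub>R axis i 1))" using assms unfolding periodic3_def by presburger
  finally show "deriv (\<lambda>s. f (x + axis k 1 + s *\<^sub>R axis i 1)) 0 = deriv (\<lambda>s. f (x + s *\<^sub>R axis i 1)) 0"
    by simp
qed

lemma openS: "open ({a<..<b::real} \<times> (UNIV :: (real^3) set))"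
  by (intro open_Times open_greaterThanLessThan open_UNIV)

lemma sp_hasd:
  fixes A :: "real \<times> (real^3) \<Rightarrow> real"
  assumes "A differentiable_on ({a<..<b} \<times> UNIV)" "t \<in> {a<..<b}"
  shows "((\<lambda>y. A (t, y)) has_derivative (\<lambda>h. dd A (0, h) (t, y))) (at y)"
proof -
  have hA: "(A has_derivative (\<lambda>h. dd A h (t, y))) (at (t, y))"
    using diff_at_hasd[OF assms(1) openS] assms(2) by auto
  have "((\<lambda>y. (t, y)) has_derivative (\<lambda>h. (0, h))) (at y)"
    by (auto intro!: derivative_eq_intros)
  from diff_chain_at[OF this hA] show ?thesis by (simp add: o_def)
qed

lemma sp_pd:
  fixes A :: "real \<times> (real^3) \<Rightarrow> real"
  assumes "A differentiable_on ({a<..<b} \<times> UNIV)" "t \<in> {a<..<b}"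
  shows "pd i (\<lambda>y. A (t, y)) y = dd A (0, axis i 1) (t, y)"
  using pd_hasd[OF sp_hasd[OF assms]] .

lemma tm_hasd:
  fixes A :: "real \<times> (real^3) \<Rightarrow> real"
  assumes "A differentiable_on ({a<..<b} \<times> UNIV)" "s \<in> {a<..<b}"
  shows "((\<lambda>s. A (s, x)) has_real_derivative dd A (1, 0) (s, x)) (at s)"
proof -
  have hA: "(A has_derivative (\<lambda>h. dd A h (s, x))) (at ((0, x) + s *\<^sub>R (1, 0)))"
    using diff_at_hasd[OF assms(1) openS] assms(2) by auto
  from line_deriv[OF hA] show ?thesis by simp
qed

lemma cont_slice:
  fixes A :: "real \<times> (real^3) \<Rightarrow> real"
  assumes "continuous_on ({a<..<b} \<times> UNIV) A" "t \<in> {a<..<b}"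
  shows "continuous_on UNIV (\<lambda>y. A (t, y))"
proof -
  have "continuous_on UNIV (A \<circ> (\<lambda>y. (t, y)))"
  proof (rule continuous_on_compose)
    show "continuous_on UNIV (Pair t)" by (auto intro!: continuous_intros)
    show "continuous_on (range (Pair t)) A" by (rule continuous_on_subset[OF assms(1)]) (use assms(2) in auto)
  qed
  then show ?thesis by (simp add: o_def)
qed

lemma norm_sq3: "(norm (x :: real^3))\<^sup>2 = (\<Sum>m\<in>UNIV. (x $ m)\<^sup>2)"
  unfolding power2_norm_eq_inner by (simp add: inner_vec_def power2_eq_square)

definition betaf :: "real \<Rightarrow> real \<Rightarrow> real" where "betaf K a = (1 - K) / (1 - K * a)"
definition betad :: "real \<Rightarrow> real \<Rightarrow> real" where "betad K a = (1 - K) * K / (1 - K * a)\<^sup>2"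
definition gf :: "real \<Rightarrow> real \<Rightarrow> real" where "gf K a = a - betaf K a * a * a"
definition gd :: "real \<Rightarrow> real \<Rightarrow> real" where "gd K a = 1 - betad K a * a * a - 2 * betaf K a * a"
definition pf :: "real \<Rightarrow> real \<Rightarrow> real" where
  "pf K a = - (K / (1 + K)) * (1 - a) + (1 - K) / (1 + K) * (1 - betaf K a) * a"
definition pdf :: "real \<Rightarrow> real \<Rightarrow> real" where
  "pdf K a = K / (1 + K) + (1 - K) / (1 + K) * ((1 - betaf K a) - betad K a * a)"
definition qf :: "real \<Rightarrow> real \<Rightarrow> real" where "qf K a = (1 - betaf K a) * a"
definition qdf :: "real \<Rightarrow> real \<Rightarrow> real" where "qdf K a = (1 - betaf K a) - betad K a * a"

lemma betaf_deriv: "1 - K * a \<noteq> 0 \<Longrightarrow> (betaf K has_real_derivative betad K a) (at a)"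
  unfolding betaf_def[abs_def] betad_def
  by (auto intro!: derivative_eq_intros simp: power2_eq_square field_simps)

lemma gf_deriv: "1 - K * a \<noteq> 0 \<Longrightarrow> (gf K has_real_derivative gd K a) (at a)"
  unfolding gf_def[abs_def] gd_def
  by (auto intro!: derivative_eq_intros betaf_deriv simp: algebra_simps)

lemma qf_deriv: "1 - K * a \<noteq> 0 \<Longrightarrow> (qf K has_real_derivative qdf K a) (at a)"
  unfolding qf_def[abs_def] qdf_def
  by (auto intro!: derivative_eq_intros betaf_deriv simp: algebra_simps)

lemma pf_deriv: "1 - K * a \<noteq> 0 \<Longrightarrow> (pf K has_real_derivative pdf K a) (at a)"
proof -
  assume d: "1 - K * a \<noteq> 0"
  define c1 where "c1 = - (K / (1 + K))"
  define c2 where "c2 = (1 - K) / (1 + K)"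
  have "((\<lambda>a. c1 * (1 - a) + c2 * qf K a) has_real_derivative c1 * (0 - 1) + c2 * qdf K a) (at a)"
    by (intro DERIV_add DERIV_cmult DERIV_diff DERIV_const DERIV_ident qf_deriv d)
  moreover have "(\<lambda>a. c1 * (1 - a) + c2 * qf K a) = pf K"
    by (rule ext) (simp add: pf_def qf_def c1_def c2_def)
  moreover have "c1 * (0 - 1) + c2 * qdf K a = pdf K a"
    by (simp add: pdf_def qdf_def c1_def c2_def)
  ultimately show ?thesis by simp
qed

lemma pf_closed: "1 - K * a \<noteq> 0 \<Longrightarrow> 1 + K \<noteq> 0 \<Longrightarrow> pf K a = - (K / (1 + K)) * (1 - a)\<^sup>2 / (1 - K * a)"
proof -
  assume d: "1 - K * a \<noteq> 0" and k: "1 + K \<noteq> 0"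
  have h: "1 - betaf K a = K * (1 - a) / (1 - K * a)" using d by (simp add: betaf_def field_simps)
  have "pf K a = - (K / (1 + K)) * (1 - a) + (1 - K) / (1 + K) * (K * (1 - a) / (1 - K * a)) * a"
    unfolding pf_def h ..
  also have "\<dots> = - (K / (1 + K)) * (1 - a)\<^sup>2 / (1 - K * a)"
    using d k by (simp add: divide_simps power2_eq_square) (simp add: algebra_simps)
  finally show ?thesis .
qed

context
  fixes K a :: real
  assumes K: "0 \<le> K" "K \<le> 1/3" and a: "0 \<le> a" "a \<le> 1/100"
begin

lemma den_pos: "1 - K * a \<ge> 99/100"
proof -
  have "K * a \<le> 1 * (1/100)" using K a by (intro mult_mono) auto
  then show ?thesis by simp
qed

lemma betaf_bd: "0 \<le> betaf K a" "betaf K a \<le> 1"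
proof -
  have d: "1 - K * a > 0" using den_pos by simp
  show "0 \<le> betaf K a" unfolding betaf_def using K d by simp
  have "1 - K \<le> 1 - K * a" using K a by (simp add: mult_left_le)
  then show "betaf K a \<le> 1" unfolding betaf_def using d by simp
qed

lemma betad_bd: "0 \<le> betad K a" "betad K a \<le> 1"
proof -
  have d: "(1 - K * a)\<^sup>2 \<ge> (99/100)\<^sup>2" using den_pos by (intro power_mono) auto
  have n: "(1 - K) * K \<le> 1 * (1/3)" using K by (intro mult_mono) auto
  show "0 \<le> betad K a" unfolding betad_def using K by simp
  have "(1 - K) * K / (1 - K * a)\<^sup>2 \<le> (1/3) / (99/100)\<^sup>2"
    using n d K by (intro frac_le) auto
  also have "\<dots> \<le> 1" by (simp add: power2_eq_square)
  finally show "betad K a \<le> 1" unfolding betad_def .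
qed

lemma gd_bd: "\<bar>gd K a\<bar> \<le> 3"
proof -
  have "betad K a * a * a \<le> 1 * 1 * 1" using betad_bd a
    by (intro mult_mono) auto
  moreover have "0 \<le> betad K a * a * a" using betad_bd a by simp
  moreover have "0 \<le> 2 * betaf K a * a" "2 * betaf K a * a \<le> 2" using betaf_bd a
    by (auto intro: mult_le_one simp: mult.assoc)
  ultimately show ?thesis unfolding gd_def by linarith
qed

lemma kfr: "0 \<le> K / (1 + K)" "K / (1 + K) \<le> 1" "0 \<le> (1 - K) / (1 + K)" "(1 - K) / (1 + K) \<le> 1"
   "\<bar>K\<bar> / \<bar>1 + K\<bar> \<le> 1" "\<bar>1 - K\<bar> / \<bar>1 + K\<bar> \<le> 1"
  using K by auto

lemma qdf_bd: "\<bar>qdf K a\<bar> \<le> 2"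
proof -
  have "betad K a * a \<le> 1 * 1" using betad_bd a by (intro mult_mono) auto
  moreover have "0 \<le> betad K a * a" using betad_bd a by simp
  ultimately show ?thesis unfolding qdf_def using betaf_bd by linarith
qed

lemma pdf_bd: "\<bar>pdf K a\<bar> \<le> 3"
proof -
  have "\<bar>(1 - K) / (1 + K) * ((1 - betaf K a) - betad K a * a)\<bar> \<le> 1 * 2"
    unfolding abs_mult using kfr qdf_bd unfolding qdf_def by (intro mult_mono) auto
  then show ?thesis unfolding pdf_def using kfr by (smt (verit))
qed

lemma gf_bd: "\<bar>gf K a\<bar> \<le> 2 * a"
proof -
  have "betaf K a * a * a \<le> 1 * a * 1" using betaf_bd a by (intro mult_mono) auto
  moreover have "0 \<le> betaf K a * a * a" using betaf_bd a by simp
  ultimately show ?thesis unfolding gf_def using a by linarith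
qed

lemma qf_bd: "\<bar>qf K a\<bar> \<le> a"
proof -
  have "(1 - betaf K a) * a \<le> 1 * a" using betaf_bd a by (intro mult_mono) auto
  moreover have "0 \<le> (1 - betaf K a) * a" using betaf_bd a by simp
  ultimately show ?thesis unfolding qf_def by linarith
qed

lemma pf_bd: "\<bar>pf K a\<bar> \<le> 2"
proof -
  have 1: "\<bar>- (K / (1 + K)) * (1 - a)\<bar> \<le> 1 * 1"
    unfolding abs_mult abs_minus using kfr a by (intro mult_mono) auto
  have 2: "\<bar>(1 - K) / (1 + K) * (1 - betaf K a) * a\<bar> \<le> 1 * 1 * 1"
    unfolding abs_mult using kfr betaf_bd a by (intro mult_mono) auto
  show ?thesis unfolding pf_def using 1 2 by (smt (verit))
qed

end

lemma poly_id_aux: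
  fixes u W ct gd pdf P Q Z qdf Dv tau X K phi Y S ia ib ic :: real
  shows "1 * inverse 2 * (2 * u * (ia * ia) * W + ((- ct * 2 * gd * W * 2 + 2 * tau * (2 * pdf * P * W - Q - Z + 2 * qdf * Dv * W)) * ia + 2 * tau * X * (- (K * ic) * (1 - phi) * ib) + 2 * tau * Y * ((1 - (1 - K) * ib) * phi * ia))) + ct * (W * ia) + K * ic * tau * (X * (1 - phi) * ib) - tau * (Y * ia * phi * (1 - (1 - K) * ib)) + tau * inverse 2 * (Dv * W * ia + 2 * Z * ia + 2 * S * W * (ia * ia)) = u * W * (ia * ia) + ct * W * (1 - 2 * gd) * ia + tau * (2 * pdf * P * W + 2 * qdf * Dv * W - Q) * ia + tau * inverse 2 * (Dv * W * ia + 2 * S * W * (ia * ia))"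
  by (simp add: algebra_simps)

lemma R_identity:
  fixes K ct tau phi u P Dv S :: real and w Pd Dd Sd f :: "3 \<Rightarrow> real" and A ww :: "3 \<Rightarrow> 3 \<Rightarrow> real"
  assumes d1: "1 - phi \<noteq> 0" and d2: "1 - K * phi \<noteq> 0" and d3: "1 + K \<noteq> 0"
    and Sd: "\<And>i. Sd i = (\<Sum>j\<in>UNIV. A i j * w j + f j * ww j i)"
    and sym: "\<And>i j. ww i j = ww j i"
    and Dv: "Dv = (\<Sum>j\<in>UNIV. A j j)"
    and S: "S = (\<Sum>j\<in>UNIV. f j * w j)"
    and W: "W = (\<Sum>i\<in>UNIV. w i * w i)"
    and Q: "Q = (\<Sum>i\<in>UNIV. \<Sum>j\<in>UNIV. w i * A i j * w j)"
  shows "1/2 * (2 * u / (1 - phi)\<^sup>2 * (\<Sum>i\<in>UNIV. w i * w i)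
            + 2 / (1 - phi) * (\<Sum>i\<in>UNIV. w i * (- ct * (2 * w i * gd K phi)
                + tau * (2 * w i * pdf K phi * P + pf K phi * Pd i - Sd i
                         + 2 * w i * qdf K phi * Dv + qf K phi * Dd i))))
     + ct * ((\<Sum>i\<in>UNIV. w i * w i) / (1 - phi))
     + K / (1 + K) * tau * ((\<Sum>i\<in>UNIV. w i * Pd i) * (1 - phi) / (1 - K * phi))
     - tau * ((\<Sum>i\<in>UNIV. w i / (1 - phi) * Dd i) * phi * (1 - (1 - K) / (1 - K * phi)))
     + tau / 2 * (\<Sum>j\<in>UNIV. A j j * (\<Sum>i\<in>UNIV. w i * w i) / (1 - phi)
          + f j * (\<Sum>i\<in>UNIV. 2 * w i * ww i j) / (1 - phi)
          + f j * (\<Sum>i\<in>UNIV. w i * w i) * (2 * w j) / (1 - phi)\<^sup>2)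
   = u * W / (1 - phi)\<^sup>2 + ct * W * (1 - 2 * gd K phi) / (1 - phi)
     + tau * (2 * pdf K phi * P * W + 2 * qdf K phi * Dv * W - Q) / (1 - phi)
     + tau / 2 * (Dv * W / (1 - phi) + 2 * S * W / (1 - phi)\<^sup>2)"
proof -
  define X where "X = (\<Sum>i\<in>UNIV. w i * Pd i)"
  define Y where "Y = (\<Sum>i\<in>UNIV. w i * Dd i)"
  define Z where "Z = (\<Sum>j\<in>UNIV. f j * (\<Sum>i\<in>UNIV. w i * ww i j))"
  have e2: "(\<Sum>i\<in>UNIV. w i * Sd i) = Q + Z"
    unfolding Sd Q Z_def by (simp add: sum_3 sym[of 1 2] sym[of 1 3] sym[of 2 3] algebra_simps)
  have e1: "(\<Sum>i\<in>UNIV. w i * (- ct * (2 * w i * gd K phi)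
                + tau * (2 * w i * pdf K phi * P + pf K phi * Pd i - Sd i
                         + 2 * w i * qdf K phi * Dv + qf K phi * Dd i)))
      = - ct * 2 * gd K phi * W + tau * (2 * pdf K phi * P * W + pf K phi * X - (Q + Z) + 2 * qdf K phi * Dv * W + qf K phi * Y)"
    unfolding e2[symmetric] W X_def Y_def by (simp add: sum_3 algebra_simps)
  have e3: "(\<Sum>i\<in>UNIV. w i / (1 - phi) * Dd i) = Y / (1 - phi)"
    unfolding Y_def by (simp add: sum_3 algebra_simps add_divide_distrib)
  have e4: "(\<Sum>j\<in>UNIV. A j j * (\<Sum>i\<in>UNIV. w i * w i) / (1 - phi)
          + f j * (\<Sum>i\<in>UNIV. 2 * w i * ww i j) / (1 - phi)
          + f j * (\<Sum>i\<in>UNIV. w i * w i) * (2 * w j) / (1 - phi)\<^sup>2)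
      = Dv * W / (1 - phi) + 2 * Z / (1 - phi) + 2 * S * W / (1 - phi)\<^sup>2"
    unfolding Dv W Z_def S by (simp add: sum_3 algebra_simps add_divide_distrib)
  have pfi: "pf K phi / (1 - phi) = - (K / (1 + K)) * (1 - phi) / (1 - K * phi)"
    using pf_closed[OF d2 d3] d1 by (simp add: power2_eq_square)
  have e1': "2 / (1 - phi) * (\<Sum>i\<in>UNIV. w i * (- ct * (2 * w i * gd K phi)
                + tau * (2 * w i * pdf K phi * P + pf K phi * Pd i - Sd i
                         + 2 * w i * qdf K phi * Dv + qf K phi * Dd i)))
     = (- ct * 2 * gd K phi * W * 2 + 2 * tau * (2 * pdf K phi * P * W - Q - Z + 2 * qdf K phi * Dv * W)) * inverse (1 - phi)
       + 2 * tau * X * (pf K phi / (1 - phi)) + 2 * tau * Y * (qf K phi / (1 - phi))"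
    unfolding e1 by (simp add: divide_inverse algebra_simps)
  show ?thesis
    unfolding e1' e3 e4 unfolding W[symmetric] X_def[symmetric] pfi qf_def betaf_def
    apply (simp only: divide_inverse power2_eq_square inverse_mult_distrib)
    by (rule poly_id_aux)
qed

lemma R_bound:
  fixes K phi r ct tau W X Y Zb sa sl P S Dv Q u :: real
  assumes K: "0 \<le> K" "K \<le> 1/3"
    and phi: "phi = r\<^sup>2" "0 \<le> r" "r \<le> 1/10"
    and ct: "0 \<le> ct" and tau: "0 \<le> tau"
    and W: "0 \<le> W" "W \<le> X" "sa * W \<le> Y" "r * sl * W \<le> Zb"
    and sa: "0 \<le> sa" and sl: "0 \<le> sl"
    and P: "\<bar>P\<bar> \<le> r * sl" and S: "\<bar>S\<bar> \<le> r\<^sup>2 * sa" and Dv: "\<bar>Dv\<bar> \<le> 2 * sa"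
    and Q: "\<bar>Q\<bar> \<le> W * sa"
    and u: "u = - ct * gf K phi + tau * (pf K phi * P - S + qf K phi * Dv)"
  shows "\<bar>u * W / (1 - phi)\<^sup>2 + ct * W * (1 - 2 * gd K phi) / (1 - phi)
          + tau * (2 * pdf K phi * P * W + 2 * qdf K phi * Dv * W - Q) / (1 - phi)
          + tau / 2 * (Dv * W / (1 - phi) + 2 * S * W / (1 - phi)\<^sup>2)\<bar>
         \<le> 30 * (ct + tau) * (X + Y + Zb)"
proof -
  have r2: "r\<^sup>2 \<le> 1/100" using phi power_mono[of r "1/10" 2] by (simp add: power2_eq_square)
  have ph: "0 \<le> phi" "phi \<le> 1/100" using phi r2 by auto
  have i1: "1 / (1 - phi) \<le> 2" "0 \<le> 1 / (1 - phi)" using ph by (auto simp: field_simps)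
  have i2: "1 / (1 - phi)\<^sup>2 \<le> 2" "0 \<le> 1 / (1 - phi)\<^sup>2"
  proof -
    have "(1 - phi)\<^sup>2 \<ge> (99/100)\<^sup>2" using ph by (intro power_mono) auto
    then have "(1 - phi)\<^sup>2 \<ge> 1/2" by (simp add: power2_eq_square)
    moreover have "(1 - phi)\<^sup>2 > 0" using ph by simp
    ultimately show "1 / (1 - phi)\<^sup>2 \<le> 2" "0 \<le> 1 / (1 - phi)\<^sup>2" by (auto simp: divide_le_eq)
  qed
  note gb = gf_bd[OF K ph] pf_bd[OF K ph] qf_bd[OF K ph] gd_bd[OF K ph] pdf_bd[OF K ph] qdf_bd[OF K ph]
  have Y0: "0 \<le> Y" using W sa by (meson mult_nonneg_nonneg order_trans)
  have Z0: "0 \<le> Zb" using W sl phi by (meson mult_nonneg_nonneg order_trans)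
  have X0: "0 \<le> X" using W by linarith
  have PW: "\<bar>P\<bar> * W \<le> Zb" using mult_right_mono[OF P W(1)] W by linarith
  have r21: "r\<^sup>2 \<le> 1" using r2 by simp
  have SW: "\<bar>S\<bar> * W \<le> Y"
  proof -
    have "\<bar>S\<bar> * W \<le> (r\<^sup>2 * sa) * W" using mult_right_mono[OF S W(1)] .
    also have "\<dots> \<le> (1 * sa) * W" using r21 sa W by (intro mult_right_mono mult_right_mono) auto
    finally show ?thesis using W by simp
  qed
  have DW: "\<bar>Dv\<bar> * W \<le> 2 * Y" using mult_right_mono[OF Dv W(1)] W by linarith
  have phW: "phi * W \<le> X" using mult_right_mono[OF ph(2) W(1)] W by linarith
  have phDW: "phi * (\<bar>Dv\<bar> * W) \<le> 2 * Y"
  proof -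
    have "phi * (\<bar>Dv\<bar> * W) \<le> 1 * (\<bar>Dv\<bar> * W)" using ph W by (intro mult_right_mono) auto
    then show ?thesis using DW by linarith
  qed
  have ub: "\<bar>u\<bar> \<le> ct * (2 * phi) + tau * (2 * \<bar>P\<bar> + \<bar>S\<bar> + phi * \<bar>Dv\<bar>)"
  proof -
    have a1: "\<bar>ct * gf K phi\<bar> \<le> ct * (2 * phi)" unfolding abs_mult abs_of_nonneg[OF ct] using ct gb(1) by (intro mult_left_mono) auto
    have a2: "\<bar>pf K phi * P\<bar> \<le> 2 * \<bar>P\<bar>" unfolding abs_mult using gb(2) by (intro mult_right_mono) auto
    have a3: "\<bar>qf K phi * Dv\<bar> \<le> phi * \<bar>Dv\<bar>" unfolding abs_mult using gb(3) by (intro mult_right_mono) auto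
    have "\<bar>pf K phi * P - S + qf K phi * Dv\<bar> \<le> 2 * \<bar>P\<bar> + \<bar>S\<bar> + phi * \<bar>Dv\<bar>" using a2 a3 by linarith
    then have "\<bar>tau * (pf K phi * P - S + qf K phi * Dv)\<bar> \<le> tau * (2 * \<bar>P\<bar> + \<bar>S\<bar> + phi * \<bar>Dv\<bar>)"
      unfolding abs_mult abs_of_nonneg[OF tau] using tau by (intro mult_left_mono) auto
    then show ?thesis unfolding u using a1 by linarith
  qed
  have uW: "\<bar>u\<bar> * W \<le> 2 * ct * X + tau * (2 * Zb + 3 * Y)"
  proof -
    have "\<bar>u\<bar> * W \<le> (ct * (2 * phi) + tau * (2 * \<bar>P\<bar> + \<bar>S\<bar> + phi * \<bar>Dv\<bar>)) * W"
      using mult_right_mono[OF ub W(1)] .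
    also have "\<dots> = 2 * ct * (phi * W) + tau * (2 * (\<bar>P\<bar> * W) + \<bar>S\<bar> * W + phi * (\<bar>Dv\<bar> * W))"
      by (simp add: algebra_simps)
    also have "\<dots> \<le> 2 * ct * X + tau * (2 * Zb + Y + 2 * Y)"
      using phW PW SW phDW ct tau by (intro add_mono mult_left_mono) auto
    finally show ?thesis by (simp add: add.commute)
  qed
  have T1: "\<bar>u * W / (1 - phi)\<^sup>2\<bar> \<le> 2 * (2 * ct * X + tau * (2 * Zb + 3 * Y))"
  proof -
    have "\<bar>u * W / (1 - phi)\<^sup>2\<bar> = (\<bar>u\<bar> * W) * (1 / (1 - phi)\<^sup>2)" using W by (simp add: abs_mult)
    also have "\<dots> \<le> (2 * ct * X + tau * (2 * Zb + 3 * Y)) * 2"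
      using uW i2 ct tau X0 Y0 Z0 by (intro mult_mono) auto
    finally show ?thesis by simp
  qed
  have T2: "\<bar>ct * W * (1 - 2 * gd K phi) / (1 - phi)\<bar> \<le> 14 * ct * X"
  proof -
    have "\<bar>ct * W * (1 - 2 * gd K phi) / (1 - phi)\<bar> = (ct * W) * \<bar>1 - 2 * gd K phi\<bar> * (1 / (1 - phi))"
      using W ct ph by (simp add: abs_mult)
    also have "\<dots> \<le> (ct * X) * 7 * 2"
      using gb(4) i1 ct W by (intro mult_mono mult_left_mono) auto
    finally show ?thesis by simp
  qed
  have T3: "\<bar>tau * (2 * pdf K phi * P * W + 2 * qdf K phi * Dv * W - Q) / (1 - phi)\<bar> \<le> tau * (12 * Zb + 18 * Y)"
  proof -
    have b1: "\<bar>2 * pdf K phi * P * W\<bar> \<le> 6 * Zb"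
    proof -
      have "\<bar>2 * pdf K phi * P * W\<bar> = 2 * \<bar>pdf K phi\<bar> * (\<bar>P\<bar> * W)" using W by (simp add: abs_mult)
      also have "\<dots> \<le> 2 * 3 * Zb" using gb(5) PW W(1) by (intro mult_mono) auto
      finally show ?thesis by simp
    qed
    have b2: "\<bar>2 * qdf K phi * Dv * W\<bar> \<le> 8 * Y"
    proof -
      have "\<bar>2 * qdf K phi * Dv * W\<bar> = 2 * \<bar>qdf K phi\<bar> * (\<bar>Dv\<bar> * W)" using W by (simp add: abs_mult)
      also have "\<dots> \<le> 2 * 2 * (2 * Y)" by (rule mult_mono) (use gb(6) DW W(1) in auto)
      finally show ?thesis by simp
    qed
    have b3: "\<bar>Q\<bar> \<le> Y" using Q W by (simp add: mult.commute)
    have "\<bar>2 * pdf K phi * P * W + 2 * qdf K phi * Dv * W - Q\<bar> \<le> 6 * Zb + 9 * Y" using b1 b2 b3 by linarith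
    then have "tau * \<bar>2 * pdf K phi * P * W + 2 * qdf K phi * Dv * W - Q\<bar> * (1 / (1 - phi))
        \<le> tau * (6 * Zb + 9 * Y) * 2"
      using tau i1 Y0 Z0 by (intro mult_mono mult_left_mono) auto
    moreover have "\<bar>tau * (2 * pdf K phi * P * W + 2 * qdf K phi * Dv * W - Q) / (1 - phi)\<bar>
       = tau * \<bar>2 * pdf K phi * P * W + 2 * qdf K phi * Dv * W - Q\<bar> * (1 / (1 - phi))"
      using tau ph by (simp add: abs_mult)
    ultimately have "\<bar>tau * (2 * pdf K phi * P * W + 2 * qdf K phi * Dv * W - Q) / (1 - phi)\<bar>
        \<le> tau * (6 * Zb + 9 * Y) * 2" by simp
    then show ?thesis by (simp add: algebra_simps)
  qed
  have T4: "\<bar>tau / 2 * (Dv * W / (1 - phi) + 2 * S * W / (1 - phi)\<^sup>2)\<bar> \<le> tau * (4 * Y)"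
  proof -
    have c1: "\<bar>Dv * W / (1 - phi)\<bar> \<le> 2 * Y * 2"
    proof -
      have "\<bar>Dv * W / (1 - phi)\<bar> = (\<bar>Dv\<bar> * W) * (1 / (1 - phi))" using W ph by (simp add: abs_mult)
      also have "\<dots> \<le> (2 * Y) * 2" by (rule mult_mono) (use DW i1 W(1) Y0 in auto)
      finally show ?thesis .
    qed
    have c2: "\<bar>2 * S * W / (1 - phi)\<^sup>2\<bar> \<le> 2 * Y * 2"
    proof -
      have "\<bar>2 * S * W / (1 - phi)\<^sup>2\<bar> = 2 * (\<bar>S\<bar> * W) * (1 / (1 - phi)\<^sup>2)" using W by (simp add: abs_mult)
      also have "\<dots> \<le> 2 * Y * 2" by (rule mult_mono) (use SW i2 W(1) Y0 in auto)
      finally show ?thesis .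
    qed
    have "\<bar>Dv * W / (1 - phi) + 2 * S * W / (1 - phi)\<^sup>2\<bar> \<le> 8 * Y" using c1 c2 by linarith
    then have "tau * \<bar>Dv * W / (1 - phi) + 2 * S * W / (1 - phi)\<^sup>2\<bar> \<le> tau * (8 * Y)"
      by (rule mult_left_mono[OF _ tau])
    then show ?thesis using tau by (simp add: abs_mult)
  qed
  have "\<bar>u * W / (1 - phi)\<^sup>2 + ct * W * (1 - 2 * gd K phi) / (1 - phi)
          + tau * (2 * pdf K phi * P * W + 2 * qdf K phi * Dv * W - Q) / (1 - phi)
          + tau / 2 * (Dv * W / (1 - phi) + 2 * S * W / (1 - phi)\<^sup>2)\<bar>
        \<le> 18 * ct * X + tau * (16 * Zb + 28 * Y)"
  proof -
    define A where "A = u * W / (1 - phi)\<^sup>2"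
    define B where "B = ct * W * (1 - 2 * gd K phi) / (1 - phi)"
    define C where "C = tau * (2 * pdf K phi * P * W + 2 * qdf K phi * Dv * W - Q) / (1 - phi)"
    define D where "D = tau / 2 * (Dv * W / (1 - phi) + 2 * S * W / (1 - phi)\<^sup>2)"
    have "\<bar>A + B + C + D\<bar> \<le> \<bar>A\<bar> + \<bar>B\<bar> + \<bar>C\<bar> + \<bar>D\<bar>"
      using abs_triangle_ineq[of "A+B+C" D] abs_triangle_ineq[of "A+B" C] abs_triangle_ineq[of A B] by linarith
    also have "\<dots> \<le> 2 * (2 * ct * X + tau * (2 * Zb + 3 * Y)) + 14 * ct * X + tau * (12 * Zb + 18 * Y) + tau * (4 * Y)"
      using T1 T2 T3 T4 unfolding A_def B_def C_def D_def by linarith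
    also have "\<dots> = 18 * ct * X + tau * (16 * Zb + 28 * Y)" by (simp add: algebra_simps)
    finally show ?thesis unfolding A_def B_def C_def D_def .
  qed
  also have "\<dots> \<le> 30 * (ct + tau) * (X + Y + Zb)"
  proof -
    have "ct * (18 * X) \<le> ct * (30 * (X + Y + Zb))" using X0 Y0 Z0 by (intro mult_left_mono[OF _ ct]) auto
    moreover have "tau * (16 * Zb + 28 * Y) \<le> tau * (30 * (X + Y + Zb))"
      using X0 Y0 Z0 by (intro mult_left_mono[OF _ tau]) auto
    ultimately show ?thesis by (simp add: algebra_simps)
  qed
  finally show ?thesis .
qed

lemma cs_abs:
  fixes x y :: "'i \<Rightarrow> real"
  shows "\<bar>\<Sum>i\<in>I. x i * y i\<bar> \<le> sqrt (\<Sum>i\<in>I. (x i)\<^sup>2) * sqrt (\<Sum>i\<in>I. (y i)\<^sup>2)"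
proof -
  have "(\<Sum>i\<in>I. x i * y i)\<^sup>2 \<le> (\<Sum>i\<in>I. (x i)\<^sup>2) * (\<Sum>i\<in>I. (y i)\<^sup>2)"
    by (rule Cauchy_Schwarz_ineq_sum)
  then have "sqrt ((\<Sum>i\<in>I. x i * y i)\<^sup>2) \<le> sqrt ((\<Sum>i\<in>I. (x i)\<^sup>2) * (\<Sum>i\<in>I. (y i)\<^sup>2))"
    by (rule real_sqrt_le_mono)
  then show ?thesis by (simp add: real_sqrt_mult)
qed

lemma W_bound:
  fixes f :: "3 \<Rightarrow> real" and A :: "3 \<Rightarrow> 3 \<Rightarrow> real" and w :: "3 \<Rightarrow> real"
  assumes wd: "\<And>i. w i = (\<Sum>m\<in>UNIV. f m * A i m)"
  shows "(\<Sum>i\<in>UNIV. w i * w i) \<le> (\<Sum>m\<in>UNIV. (f m)\<^sup>2) * (\<Sum>i\<in>UNIV. \<Sum>m\<in>UNIV. (A i m)\<^sup>2)"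
proof -
  have "w i * w i \<le> (\<Sum>m\<in>UNIV. (f m)\<^sup>2) * (\<Sum>m\<in>UNIV. (A i m)\<^sup>2)" for i
  proof -
    have "(\<Sum>m\<in>UNIV. f m * A i m)\<^sup>2 \<le> (\<Sum>m\<in>UNIV. (f m)\<^sup>2) * (\<Sum>m\<in>UNIV. (A i m)\<^sup>2)"
      by (rule Cauchy_Schwarz_ineq_sum)
    then show ?thesis using wd[of i] by (simp add: power2_eq_square)
  qed
  then have "(\<Sum>i\<in>UNIV. w i * w i) \<le> (\<Sum>i\<in>UNIV. (\<Sum>m\<in>UNIV. (f m)\<^sup>2) * (\<Sum>m\<in>UNIV. (A i m)\<^sup>2))"
    by (intro sum_mono) auto
  also have "\<dots> = (\<Sum>m\<in>UNIV. (f m)\<^sup>2) * (\<Sum>i\<in>UNIV. \<Sum>m\<in>UNIV. (A i m)\<^sup>2)"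
    by (rule sum_distrib_left[symmetric])
  finally show ?thesis .
qed

lemma Q_bound:
  fixes A :: "3 \<Rightarrow> 3 \<Rightarrow> real" and w :: "3 \<Rightarrow> real"
  shows "\<bar>\<Sum>i\<in>UNIV. \<Sum>j\<in>UNIV. w i * A i j * w j\<bar> \<le> (\<Sum>i\<in>UNIV. w i * w i) * sqrt (\<Sum>i\<in>UNIV. \<Sum>m\<in>UNIV. (A i m)\<^sup>2)"
proof -
  define W where "W = (\<Sum>i\<in>UNIV. w i * w i)"
  define z where "z i = (\<Sum>j\<in>UNIV. A i j * w j)" for i
  define a where "a = (\<Sum>i\<in>UNIV. \<Sum>m\<in>UNIV. (A i m)\<^sup>2)"
  have W0: "0 \<le> W" unfolding W_def by (simp add: sum_nonneg)
  have Wsq: "W = (\<Sum>i\<in>UNIV. (w i)\<^sup>2)" unfolding W_def by (simp add: power2_eq_square)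
  have eq: "(\<Sum>i\<in>UNIV. \<Sum>j\<in>UNIV. w i * A i j * w j) = (\<Sum>i\<in>UNIV. w i * z i)"
    unfolding z_def sum_distrib_left by (simp add: mult.assoc)
  have z2: "(z i)\<^sup>2 \<le> (\<Sum>j\<in>UNIV. (A i j)\<^sup>2) * W" for i
    unfolding z_def Wsq by (rule Cauchy_Schwarz_ineq_sum)
  have "(\<Sum>i\<in>UNIV. (z i)\<^sup>2) \<le> (\<Sum>i\<in>UNIV. (\<Sum>j\<in>UNIV. (A i j)\<^sup>2) * W)"
    by (intro sum_mono z2)
  also have "\<dots> = a * W" unfolding a_def by (rule sum_distrib_right[symmetric])
  finally have zs: "(\<Sum>i\<in>UNIV. (z i)\<^sup>2) \<le> a * W" .
  have "\<bar>\<Sum>i\<in>UNIV. w i * z i\<bar> \<le> sqrt W * sqrt (\<Sum>i\<in>UNIV. (z i)\<^sup>2)"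
    unfolding Wsq by (rule cs_abs)
  also have "\<dots> \<le> sqrt W * sqrt (a * W)"
    using zs W0 by (intro mult_left_mono real_sqrt_le_mono) auto
  also have "\<dots> = W * sqrt a"
    using W0 by (simp add: real_sqrt_mult)
  finally show ?thesis unfolding eq W_def a_def .
qed

lemma S_bound:
  fixes f w :: "3 \<Rightarrow> real"
  shows "\<bar>\<Sum>j\<in>UNIV. f j * w j\<bar> \<le> sqrt (\<Sum>m\<in>UNIV. (f m)\<^sup>2) * sqrt (\<Sum>i\<in>UNIV. w i * w i)"
  using cs_abs[of f w UNIV] by (simp add: power2_eq_square)

lemma Dv_bound:
  fixes A :: "3 \<Rightarrow> 3 \<Rightarrow> real"
  shows "\<bar>\<Sum>j\<in>UNIV. A j j\<bar> \<le> 2 * sqrt (\<Sum>i\<in>UNIV. \<Sum>m\<in>UNIV. (A i m)\<^sup>2)"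
proof -
  have "\<bar>\<Sum>j\<in>UNIV. 1 * A j j\<bar> \<le> sqrt (\<Sum>j\<in>(UNIV::3 set). 1\<^sup>2) * sqrt (\<Sum>j\<in>UNIV. (A j j)\<^sup>2)"
    by (rule cs_abs)
  also have "\<dots> \<le> 2 * sqrt (\<Sum>i\<in>UNIV. \<Sum>m\<in>UNIV. (A i m)\<^sup>2)"
  proof (rule mult_mono)
    have "sqrt 3 \<le> sqrt ((2::real)\<^sup>2)" by (rule real_sqrt_le_mono) simp
    then show "sqrt (\<Sum>j\<in>(UNIV::3 set). 1\<^sup>2) \<le> 2" by simp
    show "sqrt (\<Sum>j\<in>UNIV. (A j j)\<^sup>2) \<le> sqrt (\<Sum>i\<in>UNIV. \<Sum>m\<in>UNIV. (A i m)\<^sup>2)"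
      by (intro real_sqrt_le_mono) (simp add: sum_3)
  qed (auto intro: sum_nonneg)
  finally show ?thesis by simp
qed

lemma u_identity:
  fixes f Lg Vt :: "3 \<Rightarrow> real" and A :: "3 \<Rightarrow> 3 \<Rightarrow> real" and \<alpha> K t tau phi P S Dv :: real
  assumes Vt: "\<And>m. Vt m =
            - (\<alpha> * (1 - 3*K) / t) * f m
            - K / (1 + K) * tau * (1 - phi) * Lg m
            - tau * (\<Sum>j\<in>UNIV. f j * A j m)
            + tau * (1 - (1 - K) / (1 - K * phi)) * f m * Dv
            + tau * (1 - K) / (1 + K) * (1 - (1 - K) / (1 - K * phi)) * f m * P
            + \<alpha> * (1 - 3*K) / t * (1 - K) / (1 - K * phi) * phi * f m"
    and phi: "phi = (\<Sum>m\<in>UNIV. f m * f m)"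
    and P: "P = (\<Sum>n\<in>UNIV. f n * Lg n)"
    and S: "S = (\<Sum>j\<in>UNIV. f j * (\<Sum>m\<in>UNIV. f m * A j m))"
  shows "(\<Sum>m\<in>UNIV. f m * Vt m) = - (\<alpha> * (1 - 3*K) / t) * gf K phi
           + tau * (pf K phi * P - S + qf K phi * Dv)"
proof -
  define c where "c = \<alpha> * (1 - 3*K) / t"
  define b where "b = (1 - K) / (1 - K * phi)"
  define k1 where "k1 = K / (1 + K)"
  define k2 where "k2 = (1 - K) / (1 + K)"
  have Vt': "Vt m = - c * f m - k1 * tau * (1 - phi) * Lg m - tau * (\<Sum>j\<in>UNIV. f j * A j m)
            + tau * (1 - b) * f m * Dv + tau * k2 * (1 - b) * f m * P + c * b * phi * f m" for m
    unfolding Vt c_def b_def k1_def k2_def by (simp add: field_simps)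
  have gf: "gf K phi = phi - b * phi * phi" unfolding gf_def betaf_def b_def ..
  have pf: "pf K phi = - k1 * (1 - phi) + k2 * (1 - b) * phi" unfolding pf_def betaf_def b_def k1_def k2_def ..
  have qf: "qf K phi = (1 - b) * phi" unfolding qf_def betaf_def b_def ..
  show ?thesis
    unfolding Vt' c_def[symmetric] gf pf qf unfolding phi P S
    by (simp add: sum_3 algebra_simps)
qed

lemma main_est:
  fixes \<alpha> K t0 t1 t :: real and v :: "real \<Rightarrow> real^3 \<Rightarrow> real^3" and L :: "real \<Rightarrow> real^3 \<Rightarrow> real"
  assumes \<alpha>: "\<alpha> > 0" and K: "0 \<le> K" "K \<le> 1/3"
    and t01: "1 \<le> t0" "t0 < t1"
    and smv: "\<forall>i. smooth_on ({t0<..<t1} \<times> UNIV) (\<lambda>(t,x). v t x $ i)"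
    and smL: "smooth_on ({t0<..<t1} \<times> UNIV) (\<lambda>(t,x). L t x)"
    and per: "\<forall>t\<in>{t0<..<t1}. periodic3 (v t) \<and> periodic3 (L t)"
    and small: "\<forall>t\<in>{t0<..<t1}. \<forall>x. norm (v t x) < 1/10"
    and pde: "\<forall>t\<in>{t0<..<t1}. \<forall>x. \<forall>i.
          dtd (\<lambda>s y. v s y $ i) t x =
            - (\<alpha> * (1 - 3*K) / t) * v t x $ i
            - K / (1 + K) * t powr (-\<alpha>) * (1 - (norm (v t x))\<^sup>2) * pd i (L t) x
            - t powr (-\<alpha>) * (\<Sum>j\<in>UNIV. v t x $ j * pd j (\<lambda>y. v t y $ i) x)
            + t powr (-\<alpha>) * (1 - (1 - K) / (1 - K * (norm (v t x))\<^sup>2)) * v t x $ i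
                * (\<Sum>j\<in>UNIV. pd j (\<lambda>y. v t y $ j) x)
            + t powr (-\<alpha>) * (1 - K) / (1 + K) * (1 - (1 - K) / (1 - K * (norm (v t x))\<^sup>2))
                * v t x $ i * (\<Sum>j\<in>UNIV. v t x $ j * pd j (L t) x)
            + \<alpha> * (1 - 3*K) / t * (1 - K) / (1 - K * (norm (v t x))\<^sup>2)
                * (norm (v t x))\<^sup>2 * v t x $ i"
    and tt: "t \<in> {t0<..<t1}"
  shows "\<exists>D.
        ((\<lambda>s. 1/2 * tint (\<lambda>x. 1 / (1 - (norm (v s x))\<^sup>2) * (\<Sum>i\<in>UNIV. wv v s i x * wv v s i x)))
           has_real_derivative D) (at t)
        \<and> \<bar>D - ( - (\<alpha> * (1 - 3*K) / t)
                   * tint (\<lambda>x. (\<Sum>i\<in>UNIV. wv v t i x * wv v t i x) / (1 - (norm (v t x))\<^sup>2))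
                 - K / (1 + K) * t powr (-\<alpha>)
                   * tint (\<lambda>x. (\<Sum>i\<in>UNIV. wv v t i x
                        * pd i (\<lambda>y. \<Sum>n\<in>UNIV. v t y $ n * pd n (L t) y) x)
                        * (1 - (norm (v t x))\<^sup>2) / (1 - K * (norm (v t x))\<^sup>2))
                 + t powr (-\<alpha>)
                   * tint (\<lambda>x. (\<Sum>i\<in>UNIV. wv v t i x / (1 - (norm (v t x))\<^sup>2)
                        * pd i (\<lambda>y. \<Sum>j\<in>UNIV. pd j (\<lambda>z. v t z $ j) y) x)
                        * (norm (v t x))\<^sup>2 * (1 - (1 - K) / (1 - K * (norm (v t x))\<^sup>2))))\<bar>
          \<le> 30 * (\<alpha> + 1) * (1 + t powr (1 - \<alpha>)) / t
              * ((Dv_L2 v t)\<^sup>2 * (v_Linf v t)\<^sup>2 + (Dv_L2 v t)\<^sup>2 * (v_Linf v t)\<^sup>2 * Dv_Linf v t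
                 + (Dv_L2 v t)\<^sup>2 * (v_Linf v t)^3 * Dv_Linf v t + (DL_L2 L t)\<^sup>2 * (v_Linf v t)^3 * Dv_Linf v t)"
proof -
  define S where "S = {t0<..<t1} \<times> (UNIV :: (real^3) set)"
  have oS: "open S" unfolding S_def by (rule openS)
  define F where "F m = (\<lambda>(t,x). v t x $ m)" for m
  define G where "G = (\<lambda>(t,x). L t x)"
  define et where "et = ((1::real), (0::real^3))"
  define ex where "ex i = ((0::real), axis i (1::real) :: real^3)" for i :: 3
  define Vi where "Vi i m = dd (F m) (ex i)" for i m
  define Vt where "Vt m = dd (F m) et" for m
  define Vij where "Vij j i m = dd (Vi i m) (ex j)" for j i m
  define Vti where "Vti i m = dd (Vi i m) et" for i m
  define Vit where "Vit i m = dd (Vt m) (ex i)" for i m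
  define Li where "Li n = dd G (ex n)" for n
  define Lij where "Lij j n = dd (Li n) (ex j)" for j n
  have bt: "et \<in> Basis" unfolding et_def by (rule basis_t)
  have bx: "ex i \<in> Basis" for i unfolding ex_def by (rule basis_x)
  have smF: "smooth_on S (F m)" for m using smv unfolding S_def F_def by blast
  have smG: "smooth_on S G" using smL unfolding S_def G_def by blast
  have smVi: "smooth_on S (Vi i m)" for i m unfolding Vi_def using smF bx by (rule smooth_dd)
  have smVt: "smooth_on S (Vt m)" for m unfolding Vt_def using smF bt by (rule smooth_dd)
  have smVij: "smooth_on S (Vij j i m)" for j i m unfolding Vij_def using smVi bx by (rule smooth_dd)
  have smVti: "smooth_on S (Vti i m)" for i m unfolding Vti_def using smVi bt by (rule smooth_dd)
  have smVit: "smooth_on S (Vit i m)" for i m unfolding Vit_def using smVt bx by (rule smooth_dd)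
  have smLi: "smooth_on S (Li n)" for n unfolding Li_def using smG bx by (rule smooth_dd)
  have smLij: "smooth_on S (Lij j n)" for j n unfolding Lij_def using smLi bx by (rule smooth_dd)
  note sms = smF smG smVi smVt smVij smVti smVit smLi smLij
  have dfs: "A differentiable_on ({t0<..<t1} \<times> UNIV)" if "smooth_on S A" for A
    using smooth_diff[OF that] unfolding S_def .
  have cfs: "continuous_on S A" if "smooth_on S A" for A
    using smooth_cont[OF that] .
  have symV: "Vij j i m z = Vij i j m z" if "z \<in> S" for i j m z
    unfolding Vij_def Vi_def using clairaut[OF smF oS that bx bx] by simp
  have tV: "Vti i m z = Vit i m z" if "z \<in> S" for i m z
    unfolding Vti_def Vit_def Vi_def Vt_def using clairaut[OF smF oS that bx bt] by simp
  have phi_small: "(\<Sum>m\<in>UNIV. F m z * F m z) < 1/100" if zS: "z \<in> S" for z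
  proof -
    obtain s x where z: "z = (s, x)" and s: "s \<in> {t0<..<t1}" using zS unfolding S_def by (cases z) auto
    have "norm (v s x) < 1/10" using small s by blast
    then have "(norm (v s x))\<^sup>2 < (1/10)\<^sup>2" by (intro power_strict_mono) auto
    then show ?thesis unfolding z F_def norm_sq3 by (simp add: power2_eq_square)
  qed
  have phi_nn: "0 \<le> (\<Sum>m\<in>UNIV. F m z * F m z)" for z by (simp add: sum_nonneg)
  have cF: "continuous_on S (F m)" for m using cfs[OF smF] .
  have cVi: "continuous_on S (Vi i m)" for i m using cfs[OF smVi] .
  have cVt: "continuous_on S (Vt m)" for m using cfs[OF smVt] .
  have cVti: "continuous_on S (Vti i m)" for i m using cfs[OF smVti] .
  define phiz where "phiz z = (\<Sum>m\<in>UNIV. F m z * F m z)" for z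
  define wz where "wz i z = (\<Sum>m\<in>UNIV. F m z * Vi i m z)" for i z
  define Wz where "Wz z = (\<Sum>i\<in>UNIV. wz i z * wz i z)" for z
  define uz where "uz z = (\<Sum>m\<in>UNIV. F m z * Vt m z)" for z
  define wtz where "wtz i z = (\<Sum>m\<in>UNIV. F m z * Vti i m z + Vt m z * Vi i m z)" for i z
  define hz where "hz z = 1 / (1 - phiz z) * Wz z" for z
  define Hz where "Hz z = 2 * uz z / (1 - phiz z)\<^sup>2 * Wz z + 2 / (1 - phiz z) * (\<Sum>i\<in>UNIV. wz i z * wtz i z)" for z
  have nz: "1 - phiz z \<noteq> 0" "(1 - phiz z)\<^sup>2 \<noteq> 0" if "z \<in> S" for z
    using phi_small[OF that] unfolding phiz_def by auto
  have cphi: "continuous_on S phiz" unfolding phiz_def[abs_def] by (intro continuous_intros cF)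
  have cwz: "continuous_on S (wz i)" for i unfolding wz_def[abs_def] by (intro continuous_intros cF cVi)
  have cWz: "continuous_on S Wz" unfolding Wz_def[abs_def] by (intro continuous_intros cwz)
  have cuz: "continuous_on S uz" unfolding uz_def[abs_def] by (intro continuous_intros cF cVt)
  have cwtz: "continuous_on S (wtz i)" for i unfolding wtz_def[abs_def] by (intro continuous_intros cF cVt cVti cVi)
  have chz: "continuous_on S hz" unfolding hz_def[abs_def]
    by (intro continuous_intros cphi cWz) (use nz in auto)
  have cHz: "continuous_on S Hz" unfolding Hz_def[abs_def]
    by (intro continuous_intros cphi cWz cuz cwz cwtz) (use nz in auto)
  have tmF: "((\<lambda>s. F m (s, x)) has_real_derivative Vt m (s, x)) (at s)" if "s \<in> {t0<..<t1}" for m s x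
    using tm_hasd[OF dfs[OF smF] that] unfolding Vt_def et_def .
  have tmVi: "((\<lambda>s. Vi i m (s, x)) has_real_derivative Vti i m (s, x)) (at s)" if "s \<in> {t0<..<t1}" for i m s x
    using tm_hasd[OF dfs[OF smVi] that] unfolding Vti_def et_def .
  have dhz: "((\<lambda>s. hz (s, x)) has_real_derivative Hz (s, x)) (at s)" if s: "s \<in> {t0<..<t1}" for s x
  proof -
    have sS: "(s, x) \<in> S" using s unfolding S_def by auto
    have d1: "((\<lambda>s. phiz (s, x)) has_real_derivative 2 * uz (s, x)) (at s)"
    proof -
      have "((\<lambda>s. \<Sum>m\<in>UNIV. F m (s, x) * F m (s, x)) has_real_derivative
          (\<Sum>m\<in>UNIV. Vt m (s, x) * F m (s, x) + Vt m (s, x) * F m (s, x))) (at s)"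
        by (intro DERIV_sum DERIV_mult tmF s)
      then show ?thesis unfolding phiz_def uz_def
        by (rule DERIV_cong) (simp add: sum_distrib_left algebra_simps sum.distrib[symmetric])
    qed
    have d2: "((\<lambda>s. wz i (s, x)) has_real_derivative wtz i (s, x)) (at s)" for i
    proof -
      have "((\<lambda>s. \<Sum>m\<in>UNIV. F m (s, x) * Vi i m (s, x)) has_real_derivative
          (\<Sum>m\<in>UNIV. Vt m (s, x) * Vi i m (s, x) + Vti i m (s, x) * F m (s, x))) (at s)"
        by (intro DERIV_sum DERIV_mult tmF tmVi s)
      then show ?thesis unfolding wz_def wtz_def
        by (rule DERIV_cong) (simp add: algebra_simps)
    qed
    have d3: "((\<lambda>s. Wz (s, x)) has_real_derivative 2 * (\<Sum>i\<in>UNIV. wz i (s, x) * wtz i (s, x))) (at s)"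
    proof -
      have "((\<lambda>s. \<Sum>i\<in>UNIV. wz i (s, x) * wz i (s, x)) has_real_derivative
          (\<Sum>i\<in>UNIV. wtz i (s, x) * wz i (s, x) + wtz i (s, x) * wz i (s, x))) (at s)"
        by (intro DERIV_sum DERIV_mult d2)
      then show ?thesis unfolding Wz_def
        by (rule DERIV_cong) (simp add: algebra_simps sum_distrib_left)
    qed
    have d4: "((\<lambda>s. 1 / (1 - phiz (s, x))) has_real_derivative 2 * uz (s, x) / (1 - phiz (s, x))\<^sup>2) (at s)"
      using nz[OF sS] by (auto intro!: derivative_eq_intros d1 simp: power2_eq_square field_simps)
    have "((\<lambda>s. 1 / (1 - phiz (s, x)) * Wz (s, x)) has_real_derivative Hz (s, x)) (at s)"
      using DERIV_mult[OF d4 d3] by (rule DERIV_cong) (simp add: Hz_def algebra_simps)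
    then show ?thesis unfolding hz_def .
  qed
  have pdF: "pd i (\<lambda>y. v s y $ m) y = Vi i m (s, y)" if "s \<in> {t0<..<t1}" for i m s y
  proof -
    have "pd i (\<lambda>y. F m (s, y)) y = dd (F m) (0, axis i 1) (s, y)" by (rule sp_pd[OF dfs[OF smF] that])
    then show ?thesis by (simp add: F_def Vi_def ex_def)
  qed
  have wvz: "wv v s i y = wz i (s, y)" if "s \<in> {t0<..<t1}" for i s y
    unfolding wv_def wz_def using pdF[OF that] by (simp add: F_def)
  have nrm: "(norm (v s y))\<^sup>2 = phiz (s, y)" for s y
    unfolding norm_sq3 phiz_def by (simp add: F_def power2_eq_square)
  define \<delta> where "\<delta> = min (t - t0) (t1 - t) / 2"
  have dpos: "\<delta> > 0" using tt unfolding \<delta>_def by auto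
  define U where "U = {t - \<delta> .. t + \<delta>}"
  have d1: "\<delta> \<le> (t - t0) / 2" "\<delta> \<le> (t1 - t) / 2" unfolding \<delta>_def by auto
  have US: "U \<subseteq> {t0<..<t1}" using tt dpos d1 unfolding U_def by auto
  have tU: "t \<in> interior U" using dpos unfolding U_def by auto
  have leib: "((\<lambda>s. integral (cbox 0 One) (\<lambda>x. hz (s, x))) has_field_derivative
      integral (cbox 0 One) (\<lambda>x. Hz (t, x))) (at t within U)"
  proof (rule leibniz_rule_field_derivative)
    fix s x assume "s \<in> U" "x \<in> cbox (0::real^3) One"
    then have "s \<in> {t0<..<t1}" using US by blast
    from dhz[OF this, of x] show "((\<lambda>s. hz (s, x)) has_field_derivative Hz (s, x)) (at s within U)"
      by (rule has_field_derivative_at_within)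
  next
    fix s assume "s \<in> U"
    then have s: "s \<in> {t0<..<t1}" using US by blast
    have cs: "continuous_on UNIV (\<lambda>x. hz (s, x))" using cont_slice[OF chz[unfolded S_def] s] .
    show "(\<lambda>x. hz (s, x)) integrable_on cbox 0 One"
      by (rule integrable_continuous, rule continuous_on_subset[OF cs]) auto
  next
    have "continuous_on (U \<times> cbox 0 One) Hz"
      by (rule continuous_on_subset[OF cHz]) (use US in \<open>auto simp: S_def\<close>)
    then show "continuous_on (U \<times> cbox 0 One) (\<lambda>(s, x). Hz (s, x))" by (simp add: case_prod_eta)
  next
    show "t \<in> U" using dpos unfolding U_def by auto
    show "convex U" unfolding U_def by simp
  qed
  have leib': "((\<lambda>s. integral (cbox 0 One) (\<lambda>x. hz (s, x))) has_real_derivative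
      integral (cbox 0 One) (\<lambda>x. Hz (t, x))) (at t)"
    using leib at_within_interior[OF tU] by simp
  define D where "D = 1/2 * integral (cbox 0 One) (\<lambda>x. Hz (t, x))"
  have hasD: "((\<lambda>s. 1/2 * tint (\<lambda>x. 1 / (1 - (norm (v s x))\<^sup>2) * (\<Sum>i\<in>UNIV. wv v s i x * wv v s i x)))
           has_real_derivative D) (at t)"
  proof -
    have "((\<lambda>s. 1/2 * integral (cbox 0 One) (\<lambda>x. hz (s, x))) has_real_derivative D) (at t)"
      unfolding D_def by (rule DERIV_cmult[OF leib'])
    then show ?thesis
    proof (rule has_field_derivative_transform_within_open[where S="{t0<..<t1}"])
      show "open {t0<..<t1}" by simp
      show "t \<in> {t0<..<t1}" by (rule tt)
      fix s assume s: "s \<in> {t0<..<t1}"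
      show "1/2 * integral (cbox 0 One) (\<lambda>x. hz (s, x)) =
          1/2 * tint (\<lambda>x. 1 / (1 - (norm (v s x))\<^sup>2) * (\<Sum>i\<in>UNIV. wv v s i x * wv v s i x))"
        unfolding tint_def hz_def Wz_def nrm wvz[OF s] ..
    qed
  qed
  have tS: "(t, y) \<in> S" for y using tt unfolding S_def by auto
  have hsp: "((\<lambda>y. A (t, y)) has_derivative (\<lambda>h. dd A (0, h) (t, y))) (at y)" if "smooth_on S A" for A y
    by (rule sp_hasd[OF dfs[OF that] tt])
  have exk: "dd A (0, axis k 1) = dd A (ex k)" for A :: "real \<times> (real^3) \<Rightarrow> real" and k
    by (simp add: ex_def)
  define PHI where "PHI y = phiz (t, y)" for y
  define WW where "WW i y = wz i (t, y)" for i y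
  define WWW where "WWW y = Wz (t, y)" for y
  define UU where "UU y = uz (t, y)" for y
  define PF where "PF y = (\<Sum>n\<in>UNIV. F n (t, y) * Li n (t, y))" for y
  define SF where "SF y = (\<Sum>j\<in>UNIV. F j (t, y) * WW j y)" for y
  define DVF where "DVF y = (\<Sum>j\<in>UNIV. Vi j j (t, y))" for y
  define dPHI where "dPHI y h = (\<Sum>m\<in>UNIV. F m (t, y) * dd (F m) (0, h) (t, y) + dd (F m) (0, h) (t, y) * F m (t, y))" for y h
  define dWW where "dWW i y h = (\<Sum>m\<in>UNIV. F m (t, y) * dd (Vi i m) (0, h) (t, y) + dd (F m) (0, h) (t, y) * Vi i m (t, y))" for i y h
  define dWWW where "dWWW y h = (\<Sum>i\<in>UNIV. WW i y * dWW i y h + dWW i y h * WW i y)" for y h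
  define dUU where "dUU y h = (\<Sum>m\<in>UNIV. F m (t, y) * dd (Vt m) (0, h) (t, y) + dd (F m) (0, h) (t, y) * Vt m (t, y))" for y h
  define dPF where "dPF y h = (\<Sum>n\<in>UNIV. F n (t, y) * dd (Li n) (0, h) (t, y) + dd (F n) (0, h) (t, y) * Li n (t, y))" for y h
  define dSF where "dSF y h = (\<Sum>j\<in>UNIV. F j (t, y) * dWW j y h + dd (F j) (0, h) (t, y) * WW j y)" for y h
  define dDVF where "dDVF y h = (\<Sum>j\<in>UNIV. dd (Vi j j) (0, h) (t, y))" for y h
  have hPHI: "(PHI has_derivative dPHI y) (at y)" for y
    unfolding PHI_def[abs_def] phiz_def dPHI_def[abs_def]
    by (intro has_derivative_sum has_derivative_mult hsp smF)
  have hWW: "(WW i has_derivative dWW i y) (at y)" for i y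
    unfolding WW_def[abs_def] wz_def dWW_def[abs_def]
    by (intro has_derivative_sum has_derivative_mult hsp smF smVi)
  have hWWW: "(WWW has_derivative dWWW y) (at y)" for y
  proof -
    have "((\<lambda>y. \<Sum>i\<in>UNIV. WW i y * WW i y) has_derivative dWWW y) (at y)"
      unfolding dWWW_def[abs_def] by (intro has_derivative_sum has_derivative_mult hWW)
    moreover have "(\<lambda>y. \<Sum>i\<in>UNIV. WW i y * WW i y) = WWW" by (rule ext) (simp add: WWW_def Wz_def WW_def)
    ultimately show ?thesis by simp
  qed
  have hUU: "(UU has_derivative dUU y) (at y)" for y
    unfolding UU_def[abs_def] uz_def dUU_def[abs_def]
    by (intro has_derivative_sum has_derivative_mult hsp smF smVt)
  have hPF: "(PF has_derivative dPF y) (at y)" for y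
    unfolding PF_def[abs_def] dPF_def[abs_def]
    by (intro has_derivative_sum has_derivative_mult hsp smF smLi)
  have hSF: "(SF has_derivative dSF y) (at y)" for y
    unfolding SF_def[abs_def] dSF_def[abs_def]
    by (intro has_derivative_sum has_derivative_mult hsp smF hWW)
  have hDVF: "(DVF has_derivative dDVF y) (at y)" for y
    unfolding DVF_def[abs_def] dDVF_def[abs_def]
    by (intro has_derivative_sum hsp smVi)
  define ct where "ct = \<alpha> * (1 - 3*K) / t"
  define tau where "tau = t powr (-\<alpha>)"
  define UF where "UF y = - ct * gf K (PHI y) + tau * (pf K (PHI y) * PF y - SF y + qf K (PHI y) * DVF y)" for y
  have pdL: "pd n (L t) y = Li n (t, y)" for n y
  proof -
    have "pd n (\<lambda>y. G (t, y)) y = dd G (0, axis n 1) (t, y)" by (rule sp_pd[OF dfs[OF smG] tt])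
    moreover have "(\<lambda>y. G (t, y)) = L t" by (rule ext) (simp add: G_def)
    ultimately show ?thesis by (simp add: Li_def ex_def)
  qed
  have fvF: "v s y $ m = F m (s, y)" for s y m by (simp add: F_def)
  have PHIn: "(norm (v t y))\<^sup>2 = PHI y" for y unfolding PHI_def by (rule nrm)
  have VtP: "Vt m (t, y) =
            - (\<alpha> * (1 - 3*K) / t) * F m (t, y)
            - K / (1 + K) * tau * (1 - PHI y) * Li m (t, y)
            - tau * (\<Sum>j\<in>UNIV. F j (t, y) * Vi j m (t, y))
            + tau * (1 - (1 - K) / (1 - K * PHI y)) * F m (t, y) * DVF y
            + tau * (1 - K) / (1 + K) * (1 - (1 - K) / (1 - K * PHI y)) * F m (t, y) * PF y
            + \<alpha> * (1 - 3*K) / t * (1 - K) / (1 - K * PHI y) * PHI y * F m (t, y)" for m y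
  proof -
    have "((\<lambda>s. v s y $ m) has_real_derivative Vt m (t, y)) (at t)"
      using tmF[OF tt, of m y] by (simp add: F_def)
    then have "dtd (\<lambda>s y. v s y $ m) t y = Vt m (t, y)" by (rule dtd_hasd)
    moreover note pde[rule_format, OF tt, where x=y and i=m]
    ultimately show ?thesis
      unfolding PHIn pdL pdF[OF tt] unfolding fvF tau_def DVF_def PF_def by simp
  qed
  have UUeq: "UU y = UF y" for y
  proof -
    have "(\<Sum>m\<in>UNIV. F m (t, y) * Vt m (t, y)) = - (\<alpha> * (1 - 3*K) / t) * gf K (PHI y)
           + tau * (pf K (PHI y) * PF y - SF y + qf K (PHI y) * DVF y)"
      by (rule u_identity[OF VtP]) (simp_all add: PHI_def phiz_def PF_def SF_def WW_def wz_def)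
    then show ?thesis unfolding UU_def uz_def UF_def ct_def .
  qed
  have eF: "dd (F m) (0, axis k 1) (t, y) = Vi k m (t, y)" for m k y by (simp add: Vi_def ex_def)
  have eVi: "dd (Vi i m) (0, axis k 1) (t, y) = Vij k i m (t, y)" for i m k y by (simp add: Vij_def ex_def)
  have eVt: "dd (Vt m) (0, axis k 1) (t, y) = Vit k m (t, y)" for m k y by (simp add: Vit_def ex_def)
  have eLi: "dd (Li n) (0, axis k 1) (t, y) = Lij k n (t, y)" for n k y by (simp add: Lij_def ex_def)
  define wwv where "wwv i k y = (\<Sum>m\<in>UNIV. F m (t, y) * Vij k i m (t, y) + Vi k m (t, y) * Vi i m (t, y))" for i k y
  have pPHI: "dPHI y (axis k 1) = 2 * WW k y" for y k
    unfolding dPHI_def eF WW_def wz_def by (simp add: sum_distrib_left algebra_simps sum.distrib[symmetric])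
  have pWW: "dWW i y (axis k 1) = wwv i k y" for i y k
    unfolding dWW_def eF eVi wwv_def ..
  have pUU: "dUU y (axis k 1) = (\<Sum>m\<in>UNIV. F m (t, y) * Vit k m (t, y) + Vi k m (t, y) * Vt m (t, y))" for y k
    unfolding dUU_def eF eVt ..
  have pPF: "dPF y (axis k 1) = (\<Sum>n\<in>UNIV. F n (t, y) * Lij k n (t, y) + Vi k n (t, y) * Li n (t, y))" for y k
    unfolding dPF_def eF eLi ..
  have pSF: "dSF y (axis k 1) = (\<Sum>j\<in>UNIV. F j (t, y) * wwv j k y + Vi k j (t, y) * WW j y)" for y k
    unfolding dSF_def eF pWW ..
  have pDVF: "dDVF y (axis k 1) = (\<Sum>j\<in>UNIV. Vij k j j (t, y))" for y k
    unfolding dDVF_def eVi ..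
  have wwsym: "wwv i k y = wwv k i y" for i k y
    unfolding wwv_def using symV[OF tS] by (simp add: mult.commute)
  have nzK: "1 - K * PHI y \<noteq> 0" for y
  proof -
    have "PHI y < 1/100" using phi_small[OF tS] unfolding PHI_def phiz_def .
    moreover have "0 \<le> PHI y" unfolding PHI_def phiz_def by (simp add: sum_nonneg)
    ultimately have "K * PHI y \<le> 1/3 * 1" using K by (intro mult_mono) auto
    then show ?thesis by simp
  qed
  define dUF where "dUF y h = - ct * (dPHI y h * gd K (PHI y)) + tau * ((dPHI y h * pdf K (PHI y)) * PF y
      + pf K (PHI y) * dPF y h - dSF y h + (dPHI y h * qdf K (PHI y)) * DVF y + qf K (PHI y) * dDVF y h)" for y h
  have hUF: "(UF has_derivative dUF y) (at y)" for y
  proof -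
    note hg = DERIV_compose_FDERIV[OF gf_deriv[OF nzK] hPHI]
    note hp = DERIV_compose_FDERIV[OF pf_deriv[OF nzK] hPHI]
    note hq = DERIV_compose_FDERIV[OF qf_deriv[OF nzK] hPHI]
    show ?thesis unfolding UF_def[abs_def]
      apply (rule has_derivative_eq_rhs)
       apply (rule has_derivative_add has_derivative_mult has_derivative_diff has_derivative_minus
          has_derivative_const hg hp hq hPF hSF hDVF)+
      apply (rule ext)
      apply (simp add: dUF_def algebra_simps)
      done
  qed
  have wtz_eq: "wtz k (t, x) = dUF x (axis k 1)" for x k
  proof -
    have "wtz k (t, x) = dUU x (axis k 1)"
      unfolding wtz_def pUU using tV[OF tS] by (simp add: algebra_simps)
    also have "\<dots> = pd k UU x" by (rule pd_hasd[OF hUU, symmetric])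
    also have "\<dots> = pd k UF x" using UUeq by (metis ext)
    also have "\<dots> = dUF x (axis k 1)" by (rule pd_hasd[OF hUF])
    finally show ?thesis .
  qed
  have perv: "periodic3 (v t)" using per tt by blast
  have perF: "F m (t, y + axis k 1) = F m (t, y)" for m y k
    using perv unfolding periodic3_def F_def by simp
  have perVi: "Vi i m (t, y + axis k 1) = Vi i m (t, y)" for i m y k
  proof -
    have "periodic3 (\<lambda>y. v t y $ m)" using perv unfolding periodic3_def by simp
    then have "periodic3 (pd i (\<lambda>y. v t y $ m))" by (rule per_pd)
    then show ?thesis unfolding periodic3_def pdF[OF tt] by blast
  qed
  have csl: "continuous_on UNIV (\<lambda>y. A (t, y))" if "continuous_on S A" for A :: "real \<times> (real^3) \<Rightarrow> real"
    using cont_slice[OF that[unfolded S_def] tt] .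
  have cVij: "continuous_on S (Vij j i m)" for j i m using cfs[OF smVij] .
  have cLi: "continuous_on S (Li n)" for n using cfs[OF smLi] .
  have cLij: "continuous_on S (Lij j n)" for j n using cfs[OF smLij] .
  note csls = csl[OF cF] csl[OF cVi] csl[OF cVij] csl[OF cLi] csl[OF cLij] csl[OF cphi] csl[OF cwz] csl[OF cWz]
  have nzP: "1 - PHI y \<noteq> 0" for y using nz[OF tS] unfolding PHI_def by blast
  have nzP2: "(1 - PHI y)\<^sup>2 \<noteq> 0" for y using nz[OF tS] unfolding PHI_def by blast
  define IBf where "IBf j y = Vi j j (t, y) * WWW y / (1 - PHI y)
      + F j (t, y) * (\<Sum>i\<in>UNIV. 2 * WW i y * wwv i j y) / (1 - PHI y)
      + F j (t, y) * WWW y * (2 * WW j y) / (1 - PHI y)\<^sup>2" for j y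
  have cIBf: "continuous_on UNIV (IBf j)" for j
    unfolding IBf_def[abs_def] wwv_def WWW_def WW_def PHI_def
    by (intro continuous_intros csls) (use nz[OF tS] in auto)
  have ibp0: "tint (IBf j) = 0" for j
  proof -
    define FJ where "FJ y = F j (t, y) * WWW y / (1 - PHI y)" for y
    define dFJ where "dFJ y h = - (F j (t, y) * WWW y) * (inverse (1 - PHI y) * (0 - dPHI y h) * inverse (1 - PHI y))
        + (F j (t, y) * dWWW y h + dd (F j) (0, h) (t, y) * WWW y) / (1 - PHI y)" for y h
    have hFJ: "(FJ has_derivative dFJ y) (at y)" for y
      unfolding FJ_def[abs_def] dFJ_def
      by (intro has_derivative_divide has_derivative_mult has_derivative_diff has_derivative_const
          hsp smF hWWW hPHI nzP)
    have eFJ: "dFJ y (axis j 1) = IBf j y" for y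
    proof -
      have dw: "dWWW y (axis j 1) = (\<Sum>i\<in>UNIV. 2 * WW i y * wwv i j y)"
        unfolding dWWW_def pWW by (simp add: algebra_simps)
      show ?thesis unfolding dFJ_def IBf_def pPHI eF dw
        by (simp only: divide_inverse power2_eq_square inverse_mult_distrib) (simp add: algebra_simps)
    qed
    have pFJ: "periodic3 FJ"
      unfolding periodic3_def FJ_def WWW_def Wz_def wz_def PHI_def phiz_def by (simp add: perF perVi)
    have "tint (\<lambda>y. dFJ y (axis j 1)) = 0"
      by (rule torus_ibp[OF pFJ hFJ]) (simp add: eFJ cIBf)
    then show ?thesis unfolding eFJ by (simp add: eta_contract_eq)
  qed
  define Pd where "Pd i x = dPF x (axis i 1)" for i x
  define Dd where "Dd i x = dDVF x (axis i 1)" for i x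
  define Sd where "Sd i x = dSF x (axis i 1)" for i x
  define m1 where "m1 x = WWW x / (1 - PHI x)" for x
  define m2 where "m2 x = (\<Sum>i\<in>UNIV. WW i x * Pd i x) * (1 - PHI x) / (1 - K * PHI x)" for x
  define m3 where "m3 x = (\<Sum>i\<in>UNIV. WW i x / (1 - PHI x) * Dd i x) * PHI x * (1 - (1 - K) / (1 - K * PHI x))" for x
  define Rf where "Rf x = 1/2 * Hz (t, x) + ct * m1 x + K / (1 + K) * tau * m2 x - tau * m3 x
      + tau / 2 * (\<Sum>j\<in>UNIV. IBf j x)" for x
  define Qf where "Qf x = (\<Sum>i\<in>UNIV. \<Sum>j\<in>UNIV. WW i x * Vi i j (t, x) * WW j x)" for x
  define RHSf where "RHSf x = UF x * WWW x / (1 - PHI x)\<^sup>2 + ct * WWW x * (1 - 2 * gd K (PHI x)) / (1 - PHI x)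
     + tau * (2 * pdf K (PHI x) * PF x * WWW x + 2 * qdf K (PHI x) * DVF x * WWW x - Qf x) / (1 - PHI x)
     + tau / 2 * (DVF x * WWW x / (1 - PHI x) + 2 * SF x * WWW x / (1 - PHI x)\<^sup>2)" for x
  have WWWs: "WWW x = (\<Sum>i\<in>UNIV. WW i x * WW i x)" for x unfolding WWW_def Wz_def WW_def ..
  have Rid: "Rf x = RHSf x" for x
  proof -
    have Hx: "Hz (t, x) = 2 * UF x / (1 - PHI x)\<^sup>2 * (\<Sum>i\<in>UNIV. WW i x * WW i x)
        + 2 / (1 - PHI x) * (\<Sum>i\<in>UNIV. WW i x * (- ct * (2 * WW i x * gd K (PHI x))
                + tau * (2 * WW i x * pdf K (PHI x) * PF x + pf K (PHI x) * Pd i x - Sd i x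
                         + 2 * WW i x * qdf K (PHI x) * DVF x + qf K (PHI x) * Dd i x)))"
      unfolding Hz_def wtz_eq dUF_def pPHI Pd_def Dd_def Sd_def UUeq[unfolded UU_def, symmetric]
      unfolding PHI_def WW_def Wz_def ..
    have IB: "IBf j x = Vi j j (t, x) * (\<Sum>i\<in>UNIV. WW i x * WW i x) / (1 - PHI x)
          + F j (t, x) * (\<Sum>i\<in>UNIV. 2 * WW i x * wwv i j x) / (1 - PHI x)
          + F j (t, x) * (\<Sum>i\<in>UNIV. WW i x * WW i x) * (2 * WW j x) / (1 - PHI x)\<^sup>2" for j
      unfolding IBf_def WWWs ..
    have "Rf x = 1/2 * (2 * UF x / (1 - PHI x)\<^sup>2 * (\<Sum>i\<in>UNIV. WW i x * WW i x)
            + 2 / (1 - PHI x) * (\<Sum>i\<in>UNIV. WW i x * (- ct * (2 * WW i x * gd K (PHI x))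
                + tau * (2 * WW i x * pdf K (PHI x) * PF x + pf K (PHI x) * Pd i x - Sd i x
                         + 2 * WW i x * qdf K (PHI x) * DVF x + qf K (PHI x) * Dd i x))))
     + ct * ((\<Sum>i\<in>UNIV. WW i x * WW i x) / (1 - PHI x))
     + K / (1 + K) * tau * ((\<Sum>i\<in>UNIV. WW i x * Pd i x) * (1 - PHI x) / (1 - K * PHI x))
     - tau * ((\<Sum>i\<in>UNIV. WW i x / (1 - PHI x) * Dd i x) * PHI x * (1 - (1 - K) / (1 - K * PHI x)))
     + tau / 2 * (\<Sum>j\<in>UNIV. Vi j j (t, x) * (\<Sum>i\<in>UNIV. WW i x * WW i x) / (1 - PHI x)
          + F j (t, x) * (\<Sum>i\<in>UNIV. 2 * WW i x * wwv i j x) / (1 - PHI x)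
          + F j (t, x) * (\<Sum>i\<in>UNIV. WW i x * WW i x) * (2 * WW j x) / (1 - PHI x)\<^sup>2)"
      unfolding Rf_def Hx IB m1_def m2_def m3_def WWWs ..
    also have "\<dots> = RHSf x" unfolding RHSf_def
    proof (rule R_identity[where w = "\<lambda>i. WW i x" and Pd = "\<lambda>i. Pd i x" and Dd = "\<lambda>i. Dd i x"
        and Sd = "\<lambda>i. Sd i x" and f = "\<lambda>j. F j (t, x)" and A = "\<lambda>i j. Vi i j (t, x)"
        and ww = "\<lambda>i j. wwv i j x" and phi = "PHI x" and u = "UF x" and P = "PF x" and Dv = "DVF x"
        and S = "SF x" and W = "WWW x" and Q = "Qf x"])
      show "1 - PHI x \<noteq> 0" by (rule nzP)
      show "1 - K * PHI x \<noteq> 0" by (rule nzK)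
      show "1 + K \<noteq> 0" using K by simp
      show "Sd i x = (\<Sum>j\<in>UNIV. Vi i j (t, x) * WW j x + F j (t, x) * wwv j i x)" for i
        unfolding Sd_def pSF by (simp add: add.commute)
      show "wwv i j x = wwv j i x" for i j by (rule wwsym)
      show "DVF x = (\<Sum>j\<in>UNIV. Vi j j (t, x))" by (rule DVF_def)
      show "SF x = (\<Sum>j\<in>UNIV. F j (t, x) * WW j x)" by (rule SF_def)
      show "WWW x = (\<Sum>i\<in>UNIV. WW i x * WW i x)" by (rule WWWs)
      show "Qf x = (\<Sum>i\<in>UNIV. \<Sum>j\<in>UNIV. WW i x * Vi i j (t, x) * WW j x)" by (rule Qf_def)
    qed
    finally show ?thesis .
  qed
  define afun where "afun x = (\<Sum>i\<in>UNIV. \<Sum>j\<in>UNIV. (Vi i j (t, x))\<^sup>2)" for x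
  define lfun where "lfun x = (\<Sum>n\<in>UNIV. (Li n (t, x))\<^sup>2)" for x
  define V where "V = v_Linf v t"
  define E where "E = Dv_Linf v t"
  have a0: "0 \<le> afun x" for x unfolding afun_def by (simp add: sum_nonneg)
  have l0: "0 \<le> lfun x" for x unfolding lfun_def by (simp add: sum_nonneg)
  have PHI0: "0 \<le> PHI x" for x unfolding PHI_def phiz_def by (simp add: sum_nonneg)
  have vn: "norm (v t x) = sqrt (PHI x)" for x
    by (metis PHIn norm_ge_zero real_sqrt_abs abs_of_nonneg)
  have cPHI: "continuous_on UNIV PHI" unfolding PHI_def[abs_def] by (rule csls)
  have rV: "norm (v t x) \<le> V" for x
  proof -
    have "periodic3 (\<lambda>x. norm (v t x))" using perv unfolding periodic3_def by simp
    moreover have "continuous_on UNIV (\<lambda>x. norm (v t x))"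
      unfolding vn by (intro continuous_intros cPHI)
    ultimately show ?thesis unfolding V_def v_Linf_def by (rule per_sup(2))
  qed
  have saE: "sqrt (afun x) \<le> E" for x
  proof -
    have eqE: "E = (SUP x. sqrt (afun x))"
      unfolding E_def Dv_Linf_def afun_def pdF[OF tt] ..
    have "periodic3 (\<lambda>x. sqrt (afun x))" unfolding periodic3_def afun_def by (simp add: perVi)
    moreover have "continuous_on UNIV (\<lambda>x. sqrt (afun x))"
      unfolding afun_def by (intro continuous_intros csls)
    ultimately show ?thesis unfolding eqE by (rule per_sup(2))
  qed
  have V0: "0 \<le> V" using rV[of 0] norm_ge_zero order_trans by blast
  have E0: "0 \<le> E" using saE[of 0] real_sqrt_ge_zero[OF a0] order_trans by blast
  have t0p: "0 < t" using tt t01 by auto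
  have ct0: "0 \<le> ct" unfolding ct_def using \<alpha> K t0p by simp
  have tau0: "0 \<le> tau" unfolding tau_def by simp
  have Rbd: "\<bar>Rf x\<bar> \<le> 30 * (ct + tau) * (V\<^sup>2 * afun x + V\<^sup>2 * E * afun x + V^3 * E * afun x + V^3 * E * lfun x)" for x
  proof -
    define r where "r = norm (v t x)"
    define sa where "sa = sqrt (afun x)"
    define sl where "sl = sqrt (lfun x)"
    have r0: "0 \<le> r" unfolding r_def by simp
    have r1: "r \<le> 1/10" unfolding r_def using small tt by (simp add: less_imp_le)
    have rVx: "r \<le> V" unfolding r_def by (rule rV)
    have sa0: "0 \<le> sa" unfolding sa_def using a0 by simp
    have sl0: "0 \<le> sl" unfolding sl_def using l0 by simp
    have saEx: "sa \<le> E" unfolding sa_def by (rule saE)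
    have sa2: "sa\<^sup>2 = afun x" unfolding sa_def using a0 by simp
    have sl2: "sl\<^sup>2 = lfun x" unfolding sl_def using l0 by simp
    have phr: "PHI x = r\<^sup>2" unfolding r_def by (rule PHIn[symmetric])
    have sqphi: "sqrt (\<Sum>m\<in>UNIV. (F m (t, x))\<^sup>2) = r"
      using phr r0 unfolding PHI_def phiz_def by (simp add: power2_eq_square)
    have W0: "0 \<le> WWW x" unfolding WWWs by (simp add: sum_nonneg)
    have Wb: "WWW x \<le> PHI x * afun x"
    proof -
      have "(\<Sum>i\<in>UNIV. WW i x * WW i x) \<le> (\<Sum>m\<in>UNIV. (F m (t, x))\<^sup>2) * (\<Sum>i\<in>UNIV. \<Sum>m\<in>UNIV. (Vi i m (t, x))\<^sup>2)"
        by (rule W_bound) (simp add: WW_def wz_def)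
      then show ?thesis unfolding WWWs afun_def PHI_def phiz_def by (simp add: power2_eq_square)
    qed
    have r2V: "r\<^sup>2 \<le> V\<^sup>2" using rVx r0 by (intro power_mono) auto
    have r3V: "r^3 \<le> V^3" using rVx r0 by (intro power_mono) auto
    have hX: "WWW x \<le> V\<^sup>2 * afun x"
      using Wb mult_right_mono[OF r2V a0[of x]] phr by simp
    have hY: "sa * WWW x \<le> V\<^sup>2 * E * afun x"
    proof -
      have "sa * WWW x \<le> E * (V\<^sup>2 * afun x)" using hX saEx sa0 W0 E0 by (intro mult_mono) auto
      then show ?thesis by (simp add: algebra_simps)
    qed
    have hZ: "r * sl * WWW x \<le> V^3 * E * (lfun x + afun x)"
    proof -
      have "r * sl * WWW x \<le> r * sl * (r\<^sup>2 * afun x)"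
        using Wb phr r0 sl0 by (intro mult_left_mono) auto
      also have "\<dots> = r^3 * (sl * sa) * sa" using sa2 by (simp add: power2_eq_square power3_eq_cube algebra_simps)
      also have "\<dots> \<le> r^3 * (sl * sa) * E" using saEx r0 sl0 sa0 by (intro mult_left_mono) auto
      also have "\<dots> \<le> V^3 * (lfun x + afun x) * E"
      proof (intro mult_right_mono mult_mono r3V)
        have "0 \<le> (sl - sa)\<^sup>2" by simp
        then have "2 * (sl * sa) \<le> sl\<^sup>2 + sa\<^sup>2" by (simp add: power2_eq_square algebra_simps)
        then show "sl * sa \<le> lfun x + afun x" using sl2 sa2 sl0 sa0 by (smt (verit) mult_nonneg_nonneg)
      qed (use E0 r0 V0 sl0 sa0 a0 l0 in auto)
      finally show ?thesis by (simp add: algebra_simps)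
    qed
    have hP: "\<bar>PF x\<bar> \<le> r * sl"
      using cs_abs[of "\<lambda>n. F n (t, x)" "\<lambda>n. Li n (t, x)" UNIV] unfolding PF_def sqphi sl_def lfun_def .
    have hS: "\<bar>SF x\<bar> \<le> r\<^sup>2 * sa"
    proof -
      have "\<bar>SF x\<bar> \<le> r * sqrt (WWW x)"
        using S_bound[of "\<lambda>j. F j (t, x)" "\<lambda>i. WW i x"] unfolding SF_def sqphi WWWs .
      also have "\<dots> \<le> r * sqrt (r\<^sup>2 * afun x)" using Wb phr r0 by (intro mult_left_mono real_sqrt_le_mono) auto
      also have "\<dots> = r\<^sup>2 * sa" using r0 unfolding sa_def by (simp add: real_sqrt_mult power2_eq_square)
      finally show ?thesis .
    qed
    have hDv: "\<bar>DVF x\<bar> \<le> 2 * sa"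
      using Dv_bound[of "\<lambda>i m. Vi i m (t, x)"] unfolding DVF_def sa_def afun_def .
    have hQ: "\<bar>Qf x\<bar> \<le> WWW x * sa"
      using Q_bound[of "\<lambda>i. WW i x" "\<lambda>i m. Vi i m (t, x)"] unfolding Qf_def WWWs sa_def afun_def .
    have "\<bar>RHSf x\<bar> \<le> 30 * (ct + tau) * (V\<^sup>2 * afun x + V\<^sup>2 * E * afun x + V^3 * E * (lfun x + afun x))"
      unfolding RHSf_def
      by (rule R_bound[OF K phr r0 r1 ct0 tau0 W0 hX hY hZ sa0 sl0 hP hS hDv hQ]) (simp add: UF_def)
    then show ?thesis unfolding Rid by (simp add: algebra_simps)
  qed
  have intI: "f integrable_on cbox 0 One" if "continuous_on UNIV f" for f :: "real^3 \<Rightarrow> real"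
    by (rule integrable_continuous, rule continuous_on_subset[OF that]) auto
  have hasI: "(f has_integral integral (cbox 0 One) f) (cbox 0 One)" if "continuous_on UNIV f" for f :: "real^3 \<Rightarrow> real"
    using intI[OF that] by (rule integrable_integral)
  have cWW: "continuous_on UNIV (WW i)" for i unfolding WW_def[abs_def] by (rule csls)
  have cWWW: "continuous_on UNIV WWW" unfolding WWW_def[abs_def] by (rule csls)
  have cPd: "continuous_on UNIV (Pd i)" for i unfolding Pd_def[abs_def] pPF by (intro continuous_intros csls)
  have cDd: "continuous_on UNIV (Dd i)" for i unfolding Dd_def[abs_def] pDVF by (intro continuous_intros csls)
  have cHzt: "continuous_on UNIV (\<lambda>x. Hz (t, x))" by (rule csl[OF cHz])
  have cm1: "continuous_on UNIV m1" unfolding m1_def[abs_def] by (intro continuous_intros cWWW cPHI) (use nzP in auto)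
  have cm2: "continuous_on UNIV m2" unfolding m2_def[abs_def] by (intro continuous_intros cWW cPd cPHI) (use nzK in auto)
  have cm3: "continuous_on UNIV m3" unfolding m3_def[abs_def]
    by (intro continuous_intros cWW cDd cPHI) (use nzK nzP in auto)
  have cafun: "continuous_on UNIV afun" unfolding afun_def[abs_def] by (intro continuous_intros csls)
  have clfun: "continuous_on UNIV lfun" unfolding lfun_def[abs_def] by (intro continuous_intros csls)
  have IBI: "(IBf j has_integral 0) (cbox 0 One)" for j
    using hasI[OF cIBf[of j]] ibp0[of j] unfolding tint_def by simp
  have RI: "(Rf has_integral (1/2 * integral (cbox 0 One) (\<lambda>x. Hz (t, x)) + ct * integral (cbox 0 One) m1
      + K / (1 + K) * tau * integral (cbox 0 One) m2 - tau * integral (cbox 0 One) m3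
      + tau / 2 * 0)) (cbox 0 One)"
  proof -
    have IBS: "((\<lambda>x. \<Sum>j\<in>UNIV. IBf j x) has_integral 0) (cbox 0 One)"
      using has_integral_sum[of UNIV IBf "\<lambda>_. 0"] IBI by simp
    show ?thesis unfolding Rf_def[abs_def]
      by (intro has_integral_add has_integral_diff has_integral_mult_right hasI IBS cHzt cm1 cm2 cm3)
  qed
  have PFeq: "(\<lambda>y. \<Sum>n\<in>UNIV. v t y $ n * pd n (L t) y) = PF"
    by (rule ext) (simp add: PF_def pdL fvF)
  have DVFeq: "(\<lambda>y. \<Sum>j\<in>UNIV. pd j (\<lambda>z. v t z $ j) y) = DVF"
    by (rule ext) (simp add: DVF_def pdF[OF tt])
  have pdPF: "pd i PF x = Pd i x" for i x unfolding Pd_def by (rule pd_hasd[OF hPF])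
  have pdDVF: "pd i DVF x = Dd i x" for i x unfolding Dd_def by (rule pd_hasd[OF hDVF])
  have wvt: "wv v t i x = WW i x" for i x unfolding WW_def by (rule wvz[OF tt])
  have T1: "tint (\<lambda>x. (\<Sum>i\<in>UNIV. wv v t i x * wv v t i x) / (1 - (norm (v t x))\<^sup>2)) = integral (cbox 0 One) m1"
    unfolding tint_def wvt PHIn m1_def WWWs ..
  have T2: "tint (\<lambda>x. (\<Sum>i\<in>UNIV. wv v t i x * pd i (\<lambda>y. \<Sum>n\<in>UNIV. v t y $ n * pd n (L t) y) x)
                        * (1 - (norm (v t x))\<^sup>2) / (1 - K * (norm (v t x))\<^sup>2)) = integral (cbox 0 One) m2"
    unfolding tint_def wvt PHIn m2_def PFeq pdPF ..
  have T3: "tint (\<lambda>x. (\<Sum>i\<in>UNIV. wv v t i x / (1 - (norm (v t x))\<^sup>2)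
                        * pd i (\<lambda>y. \<Sum>j\<in>UNIV. pd j (\<lambda>z. v t z $ j) y) x)
                        * (norm (v t x))\<^sup>2 * (1 - (1 - K) / (1 - K * (norm (v t x))\<^sup>2))) = integral (cbox 0 One) m3"
    unfolding tint_def wvt PHIn m3_def DVFeq pdDVF ..
  have Deq: "D - ( - (\<alpha> * (1 - 3*K) / t) * integral (cbox 0 One) m1
        - K / (1 + K) * t powr (-\<alpha>) * integral (cbox 0 One) m2 + t powr (-\<alpha>) * integral (cbox 0 One) m3)
      = integral (cbox 0 One) Rf"
    using integral_unique[OF RI] unfolding D_def ct_def tau_def by simp
  define c1 where "c1 = 30 * (ct + tau) * (V\<^sup>2 + V\<^sup>2 * E + V^3 * E)"
  define c2 where "c2 = 30 * (ct + tau) * (V^3 * E)"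
  have Bf_eq: "30 * (ct + tau) * (V\<^sup>2 * afun x + V\<^sup>2 * E * afun x + V^3 * E * afun x + V^3 * E * lfun x)
      = c1 * afun x + c2 * lfun x" for x
    unfolding c1_def c2_def by (simp add: algebra_simps)
  have BI: "((\<lambda>x. c1 * afun x + c2 * lfun x) has_integral
      (c1 * integral (cbox 0 One) afun + c2 * integral (cbox 0 One) lfun)) (cbox 0 One)"
    by (intro has_integral_add has_integral_mult_right hasI cafun clfun)
  have Rint: "Rf integrable_on cbox 0 One" using RI by blast
  have bound1: "\<bar>integral (cbox 0 One) Rf\<bar> \<le> c1 * integral (cbox 0 One) afun + c2 * integral (cbox 0 One) lfun"
  proof -
    have "norm (integral (cbox 0 One) Rf) \<le> integral (cbox 0 One) (\<lambda>x. c1 * afun x + c2 * lfun x)"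
      by (rule integral_norm_bound_integral[OF Rint]) (use BI Rbd Bf_eq in \<open>auto simp: integrable_on_def\<close>)
    then show ?thesis using integral_unique[OF BI] by simp
  qed
  have aI: "integral (cbox 0 One) afun = (Dv_L2 v t)\<^sup>2"
  proof -
    have "0 \<le> integral (cbox 0 One) afun" by (rule integral_nonneg[OF intI[OF cafun]]) (simp add: a0)
    moreover have "Dv_L2 v t = sqrt (integral (cbox 0 One) afun)"
      unfolding Dv_L2_def tint_def afun_def pdF[OF tt] ..
    ultimately show ?thesis by simp
  qed
  have lI: "integral (cbox 0 One) lfun = (DL_L2 L t)\<^sup>2"
  proof -
    have "0 \<le> integral (cbox 0 One) lfun" by (rule integral_nonneg[OF intI[OF clfun]]) (simp add: l0)
    moreover have "DL_L2 L t = sqrt (integral (cbox 0 One) lfun)"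
      unfolding DL_L2_def tint_def lfun_def pdL ..
    ultimately show ?thesis by simp
  qed
  have ctt: "30 * (ct + tau) \<le> 30 * (\<alpha> + 1) * (1 + t powr (1 - \<alpha>)) / t"
  proof -
    have "ct \<le> \<alpha> / t" unfolding ct_def using \<alpha> K t0p by (simp add: divide_right_mono mult_left_le)
    also have "\<dots> \<le> (\<alpha> + 1) / t" using t0p by (simp add: divide_right_mono)
    finally have c: "ct \<le> (\<alpha> + 1) / t" .
    have "tau \<le> (\<alpha> + 1) * tau" using tau0 \<alpha> by (simp add: mult_le_cancel_right1 mult_right_mono)
    moreover have "t powr (1 - \<alpha>) / t = tau"
      unfolding tau_def using t0p by (simp add: powr_diff powr_minus divide_inverse)
    ultimately have "ct + tau \<le> (\<alpha> + 1) / t + (\<alpha> + 1) * (t powr (1 - \<alpha>) / t)" using c by simp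
    also have "\<dots> = (\<alpha> + 1) * (1 + t powr (1 - \<alpha>)) / t" using t0p by (simp add: field_simps)
    finally have "ct + tau \<le> (\<alpha> + 1) * (1 + t powr (1 - \<alpha>)) / t" .
    then have "30 * (ct + tau) \<le> 30 * ((\<alpha> + 1) * (1 + t powr (1 - \<alpha>)) / t)" by simp
    then show ?thesis by (simp only: times_divide_eq_right mult.assoc)
  qed
  have Bnn: "0 \<le> (Dv_L2 v t)\<^sup>2 * V\<^sup>2 + (Dv_L2 v t)\<^sup>2 * V\<^sup>2 * E + (Dv_L2 v t)\<^sup>2 * V^3 * E + (DL_L2 L t)\<^sup>2 * V^3 * E"
    using V0 E0 by simp
  have fin: "c1 * integral (cbox 0 One) afun + c2 * integral (cbox 0 One) lfun
      = 30 * (ct + tau) * ((Dv_L2 v t)\<^sup>2 * V\<^sup>2 + (Dv_L2 v t)\<^sup>2 * V\<^sup>2 * E + (Dv_L2 v t)\<^sup>2 * V^3 * E + (DL_L2 L t)\<^sup>2 * V^3 * E)"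
    unfolding aI lI c1_def c2_def by (simp add: algebra_simps)
  have "\<bar>integral (cbox 0 One) Rf\<bar> \<le> 30 * (\<alpha> + 1) * (1 + t powr (1 - \<alpha>)) / t
      * ((Dv_L2 v t)\<^sup>2 * V\<^sup>2 + (Dv_L2 v t)\<^sup>2 * V\<^sup>2 * E + (Dv_L2 v t)\<^sup>2 * V^3 * E + (DL_L2 L t)\<^sup>2 * V^3 * E)"
    using bound1 unfolding fin using mult_right_mono[OF ctt Bnn] by linarith
  then have fb: "\<bar>integral (cbox 0 One) Rf\<bar> \<le> 30 * (\<alpha> + 1) * (1 + t powr (1 - \<alpha>)) / t
      * ((Dv_L2 v t)\<^sup>2 * (v_Linf v t)\<^sup>2 + (Dv_L2 v t)\<^sup>2 * (v_Linf v t)\<^sup>2 * Dv_Linf v t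
         + (Dv_L2 v t)\<^sup>2 * (v_Linf v t)^3 * Dv_Linf v t + (DL_L2 L t)\<^sup>2 * (v_Linf v t)^3 * Dv_Linf v t)"
    unfolding V_def E_def .
  show ?thesis
  proof (intro exI[of _ D] conjI)
    show "((\<lambda>s. 1/2 * tint (\<lambda>x. 1 / (1 - (norm (v s x))\<^sup>2) * (\<Sum>i\<in>UNIV. wv v s i x * wv v s i x)))
           has_real_derivative D) (at t)" by (rule hasD)
  next
    show "\<bar>D - ( - (\<alpha> * (1 - 3*K) / t)
                   * tint (\<lambda>x. (\<Sum>i\<in>UNIV. wv v t i x * wv v t i x) / (1 - (norm (v t x))\<^sup>2))
                 - K / (1 + K) * t powr (-\<alpha>)
                   * tint (\<lambda>x. (\<Sum>i\<in>UNIV. wv v t i x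
                        * pd i (\<lambda>y. \<Sum>n\<in>UNIV. v t y $ n * pd n (L t) y) x)
                        * (1 - (norm (v t x))\<^sup>2) / (1 - K * (norm (v t x))\<^sup>2))
                 + t powr (-\<alpha>)
                   * tint (\<lambda>x. (\<Sum>i\<in>UNIV. wv v t i x / (1 - (norm (v t x))\<^sup>2)
                        * pd i (\<lambda>y. \<Sum>j\<in>UNIV. pd j (\<lambda>z. v t z $ j) y) x)
                        * (norm (v t x))\<^sup>2 * (1 - (1 - K) / (1 - K * (norm (v t x))\<^sup>2))))\<bar>
          \<le> 30 * (\<alpha> + 1) * (1 + t powr (1 - \<alpha>)) / t
              * ((Dv_L2 v t)\<^sup>2 * (v_Linf v t)\<^sup>2 + (Dv_L2 v t)\<^sup>2 * (v_Linf v t)\<^sup>2 * Dv_Linf v t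
                 + (Dv_L2 v t)\<^sup>2 * (v_Linf v t)^3 * Dv_Linf v t + (DL_L2 L t)\<^sup>2 * (v_Linf v t)^3 * Dv_Linf v t)"
      unfolding T1 T2 T3 Deq by (rule fb)
  qed
qed

definition cc :: "nat \<times> nat \<times> nat \<times> nat \<Rightarrow> real" where
  "cc m = (if m \<in> {(0,2,2,0), (0,2,2,1), (0,2,3,1), (2,0,3,1)} then 1 else 0)"

lemma cc_supp: "{m. cc m \<noteq> 0} = {(0,2,2,0), (0,2,2,1), (0,2,3,1), (2,0,3,1)}"
  by (auto simp: cc_def)

lemma lowdeg3_cc: "lowdeg3 cc"
  unfolding lowdeg3_def cc_supp by (auto simp: cc_def)

lemma poly4_cc: "poly4 cc a b d e = b\<^sup>2 * d\<^sup>2 + b\<^sup>2 * d\<^sup>2 * e + b\<^sup>2 * d^3 * e + a\<^sup>2 * d^3 * e"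
  unfolding poly4_def cc_supp by (simp add: cc_def)

theorem lemma4p7:
  fixes \<alpha> K :: real
  assumes "\<alpha> > 0" and "0 \<le> K" and "K \<le> 1/3"
  shows "\<exists>C c. lowdeg3 c \<and>
   (\<forall>(t0::real) t1 (v :: real \<Rightarrow> real^3 \<Rightarrow> real^3) (L :: real \<Rightarrow> real^3 \<Rightarrow> real).
     1 \<le> t0 \<and> t0 < t1
     \<and> (\<forall>i. smooth_on ({t0<..<t1} \<times> UNIV) (\<lambda>(t,x). v t x $ i))
     \<and> smooth_on ({t0<..<t1} \<times> UNIV) (\<lambda>(t,x). L t x)
     \<and> (\<forall>t\<in>{t0<..<t1}. periodic3 (v t) \<and> periodic3 (L t))
     \<and> (\<forall>t\<in>{t0<..<t1}. \<forall>x. norm (v t x) < 1/10)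
     \<and> (\<forall>t\<in>{t0<..<t1}. \<forall>x. \<forall>i.
          dtd (\<lambda>s y. v s y $ i) t x =
            - (\<alpha> * (1 - 3*K) / t) * v t x $ i
            - K / (1 + K) * t powr (-\<alpha>) * (1 - (norm (v t x))\<^sup>2) * pd i (L t) x
            - t powr (-\<alpha>) * (\<Sum>j\<in>UNIV. v t x $ j * pd j (\<lambda>y. v t y $ i) x)
            + t powr (-\<alpha>) * (1 - (1 - K) / (1 - K * (norm (v t x))\<^sup>2)) * v t x $ i
                * (\<Sum>j\<in>UNIV. pd j (\<lambda>y. v t y $ j) x)
            + t powr (-\<alpha>) * (1 - K) / (1 + K) * (1 - (1 - K) / (1 - K * (norm (v t x))\<^sup>2))
                * v t x $ i * (\<Sum>j\<in>UNIV. v t x $ j * pd j (L t) x)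
            + \<alpha> * (1 - 3*K) / t * (1 - K) / (1 - K * (norm (v t x))\<^sup>2)
                * (norm (v t x))\<^sup>2 * v t x $ i)
     \<and> (\<forall>t\<in>{t0<..<t1}. \<forall>x.
          dtd L t x =
            - (t powr (-\<alpha>) * (1 + K) / (1 - K * (norm (v t x))\<^sup>2) * (\<Sum>j\<in>UNIV. pd j (\<lambda>y. v t y $ j) x))
            - t powr (-\<alpha>) * (1 - K) / (1 - K * (norm (v t x))\<^sup>2) * (\<Sum>j\<in>UNIV. v t x $ j * pd j (L t) x)
            + \<alpha> * (1 + K) / t * (1 - 3*K) / (1 - K * (norm (v t x))\<^sup>2) * (norm (v t x))\<^sup>2)
     \<longrightarrow>
     (\<forall>t\<in>{t0<..<t1}. \<exists>D.
        ((\<lambda>s. 1/2 * tint (\<lambda>x. 1 / (1 - (norm (v s x))\<^sup>2) * (\<Sum>i\<in>UNIV. wv v s i x * wv v s i x)))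
           has_real_derivative D) (at t)
        \<and> \<bar>D - ( - (\<alpha> * (1 - 3*K) / t)
                   * tint (\<lambda>x. (\<Sum>i\<in>UNIV. wv v t i x * wv v t i x) / (1 - (norm (v t x))\<^sup>2))
                 - K / (1 + K) * t powr (-\<alpha>)
                   * tint (\<lambda>x. (\<Sum>i\<in>UNIV. wv v t i x
                        * pd i (\<lambda>y. \<Sum>n\<in>UNIV. v t y $ n * pd n (L t) y) x)
                        * (1 - (norm (v t x))\<^sup>2) / (1 - K * (norm (v t x))\<^sup>2))
                 + t powr (-\<alpha>)
                   * tint (\<lambda>x. (\<Sum>i\<in>UNIV. wv v t i x / (1 - (norm (v t x))\<^sup>2)
                        * pd i (\<lambda>y. \<Sum>j\<in>UNIV. pd j (\<lambda>z. v t z $ j) y) x)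
                        * (norm (v t x))\<^sup>2 * (1 - (1 - K) / (1 - K * (norm (v t x))\<^sup>2))))\<bar>
          \<le> C * (1 + t powr (1 - \<alpha>)) / t
              * poly4 c (DL_L2 L t) (Dv_L2 v t) (v_Linf v t) (Dv_Linf v t)))"
proof -
  show ?thesis
    apply (rule exI[of _ "30 * (\<alpha> + 1)"], rule exI[of _ cc])
    apply (intro conjI lowdeg3_cc allI impI ballI)
    apply (elim conjE)
    apply (unfold poly4_cc)
    apply (rule main_est[OF assms]; assumption)
    done
qed

end
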